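(* Let $V\in BC^\infty(\mathbb{R}^2;\mathbb{R})$, $\mathcal{A}\in BC^\infty(\mathbb{R}^2;\mathbb{R}^2)$, $b\in\mathbb{R}$, $A(\mathbf{x})=(-x_2,0)$, $H_b=(-\mathrm{i}\nabla-\mathcal{A}-bA)^2+V$ on $L^2(\mathbb{R}^2)$ (closure from $C_c^\infty(\mathbb{R}^2)$), $E=\{x_2>0\}$, and let $H_b^E$ be the closure in $L^2(E)$ of $H_b$ restricted to $C_c^\infty(\bar E)$. Let $\ell>2$ and let $\tilde\eta_\ell:E\to[0,1]$ be a smooth function depending only on $x_2$, with $\operatorname{supp}\tilde\eta_\ell\subset\{\mathbf{x}\in E: x_2>\sqrt\ell/4\}$ and $\|\partial_2^n\tilde\eta_\ell\|_\infty\lesssim \ell^{-n/2}$ for $n\ge1$. Then multiplication by $\tilde\eta_\ell$ maps $D(H_b)$ into $D(H_b^E)$, and for every $\psi\in D(H_b)$, $$H_b^E\,\tilde\eta_\ell\psi=H_b\,\tilde\eta_\ell\psi.$$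
   Context: $BC^\infty$ denotes smooth functions with all derivatives bounded. $C_c^\infty(\bar E)$ is the set of smooth functions on $E$ whose partial derivatives all extend continuously to $\bar E$ and which vanish outside $(-a,a)\times(0,a)$ for some $a>0$. Functions on $E$ are identified with functions on $\mathbb{R}^2$ vanishing outside $E$ (and $\tilde\eta_\ell$ is extended by $0$ to $\mathbb{R}^2$). In the paper $\tilde\eta_\ell$ is additionally part of a pair of cut-off functions adapted to a partition of unity near/far from the boundary; only the listed properties enter the statement. *)

theory Defs
  imports "HOL-Analysis.Analysis"
begin

text \<open>Points of the plane are pairs (x1, x2). Coordinate directions are indexed by
  0 (x1) and 1 (x2).\<close>

definition coord_dir :: "nat \<Rightarrow> real \<times> real" where
  "coord_dir i = (if i = 0 then (1, 0) else (0, 1))"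

definition partial :: "nat \<Rightarrow> (real \<times> real \<Rightarrow> 'a::real_normed_vector) \<Rightarrow> real \<times> real \<Rightarrow> 'a" where
  "partial i f x = vector_derivative (\<lambda>t. f (x + t *\<^sub>R coord_dir i)) (at 0)"

fun dpar :: "nat list \<Rightarrow> (real \<times> real \<Rightarrow> 'a::real_normed_vector) \<Rightarrow> real \<times> real \<Rightarrow> 'a" where
  "dpar [] f = f"
| "dpar (i # ds) f = partial i (dpar ds f)"

definition smooth_on :: "(real \<times> real) set \<Rightarrow> (real \<times> real \<Rightarrow> 'a::real_normed_vector) \<Rightarrow> bool" where
  "smooth_on S f \<longleftrightarrow> (\<forall>ds. continuous_on S (dpar ds f) \<and>
     (\<forall>i\<in>{0,1}. \<forall>x\<in>S. (\<lambda>t. dpar ds f (x + t *\<^sub>R coord_dir i)) differentiable (at 0)))"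

definition BC_inf :: "(real \<times> real \<Rightarrow> real) \<Rightarrow> bool" where
  "BC_inf f \<longleftrightarrow> smooth_on UNIV f \<and> (\<forall>ds. bounded (range (dpar ds f)))"

definition E_half :: "(real \<times> real) set" where
  "E_half = {x. snd x > 0}"

definition Cc_plane :: "(real \<times> real \<Rightarrow> complex) \<Rightarrow> bool" where
  "Cc_plane \<phi> \<longleftrightarrow> smooth_on UNIV \<phi> \<and> (\<exists>R. \<forall>x. norm x > R \<longrightarrow> \<phi> x = 0)"

text \<open>C_c^infinity(closure E), functions identified with functions on R^2 vanishing outside E.\<close>
definition Cc_Ebar :: "(real \<times> real \<Rightarrow> complex) \<Rightarrow> bool" where
  "Cc_Ebar \<phi> \<longleftrightarrow> (\<forall>x. x \<notin> E_half \<longrightarrow> \<phi> x = 0) \<and> smooth_on E_half \<phi> \<and>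
     (\<forall>ds. \<exists>g. continuous_on (closure E_half) g \<and> (\<forall>x\<in>E_half. g x = dpar ds \<phi> x)) \<and>
     (\<exists>a>0. \<forall>x. \<not> (- a < fst x \<and> fst x < a \<and> 0 < snd x \<and> snd x < a) \<longrightarrow> \<phi> x = 0)"

definition L2 :: "(real \<times> real \<Rightarrow> complex) \<Rightarrow> bool" where
  "L2 f \<longleftrightarrow> f \<in> borel_measurable lborel \<and> integrable lborel (\<lambda>x. (cmod (f x))\<^sup>2)"

definition L2_conv :: "(nat \<Rightarrow> real \<times> real \<Rightarrow> complex) \<Rightarrow> (real \<times> real \<Rightarrow> complex) \<Rightarrow> bool" where
  "L2_conv \<phi> \<psi> \<longleftrightarrow> ((\<lambda>n. \<integral>\<^sup>+ x. ennreal ((cmod (\<phi> n x - \<psi> x))\<^sup>2) \<partial>lborel) \<longlonglongrightarrow> 0)"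

text \<open>Graph of the closure of an operator T defined on the core D:
  (psi, f) lies in the graph iff there are phi_n in D with phi_n \<rightarrow> psi and T phi_n \<rightarrow> f in L^2.\<close>
definition closure_graph ::
  "((real \<times> real \<Rightarrow> complex) \<Rightarrow> bool) \<Rightarrow> ((real \<times> real \<Rightarrow> complex) \<Rightarrow> (real \<times> real \<Rightarrow> complex))
    \<Rightarrow> (real \<times> real \<Rightarrow> complex) \<Rightarrow> (real \<times> real \<Rightarrow> complex) \<Rightarrow> bool" where
  "closure_graph D T \<psi> f \<longleftrightarrow> L2 \<psi> \<and> L2 f \<and>
     (\<exists>\<phi>. (\<forall>n. D (\<phi> n)) \<and> L2_conv \<phi> \<psi> \<and> L2_conv (\<lambda>n. T (\<phi> n)) f)"

text \<open>Total magnetic potential  \<A> + b A  with A(x) = (-x2, 0); component j.\<close>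
definition mag_pot :: "(real \<times> real \<Rightarrow> real) \<Rightarrow> (real \<times> real \<Rightarrow> real) \<Rightarrow> real \<Rightarrow> nat \<Rightarrow> real \<times> real \<Rightarrow> real" where
  "mag_pot a1 a2 b j x = (if j = 0 then a1 x - b * snd x else a2 x)"

definition Pcomp :: "(real \<times> real \<Rightarrow> real) \<Rightarrow> (real \<times> real \<Rightarrow> real) \<Rightarrow> real \<Rightarrow> nat
    \<Rightarrow> (real \<times> real \<Rightarrow> complex) \<Rightarrow> real \<times> real \<Rightarrow> complex" where
  "Pcomp a1 a2 b j \<phi> x = - \<i> * partial j \<phi> x - complex_of_real (mag_pot a1 a2 b j x) * \<phi> x"

definition Hop :: "(real \<times> real \<Rightarrow> real) \<Rightarrow> (real \<times> real \<Rightarrow> real) \<Rightarrow> (real \<times> real \<Rightarrow> real) \<Rightarrow> real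
    \<Rightarrow> (real \<times> real \<Rightarrow> complex) \<Rightarrow> real \<times> real \<Rightarrow> complex" where
  "Hop V a1 a2 b \<phi> x = Pcomp a1 a2 b 0 (Pcomp a1 a2 b 0 \<phi>) x
       + Pcomp a1 a2 b 1 (Pcomp a1 a2 b 1 \<phi>) x + complex_of_real (V x) * \<phi> x"

definition HopE :: "(real \<times> real \<Rightarrow> real) \<Rightarrow> (real \<times> real \<Rightarrow> real) \<Rightarrow> (real \<times> real \<Rightarrow> real) \<Rightarrow> real
    \<Rightarrow> (real \<times> real \<Rightarrow> complex) \<Rightarrow> real \<times> real \<Rightarrow> complex" where
  "HopE V a1 a2 b \<phi> x = (if x \<in> E_half then Hop V a1 a2 b \<phi> x else 0)"

definition Hb_graph where
  "Hb_graph V a1 a2 b = closure_graph Cc_plane (Hop V a1 a2 b)"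

definition HbE_graph where
  "HbE_graph V a1 a2 b = closure_graph Cc_Ebar (HopE V a1 a2 b)"

end

theory Submission
  imports Defs
begin

definition LD :: "(real \<times> real \<Rightarrow> 'a::real_normed_vector) \<Rightarrow> bool" where
  "LD f \<longleftrightarrow> (\<forall>i x. (\<lambda>t. f (x + t *\<^sub>R coord_dir i)) differentiable (at 0))"

definition D0 :: "(real \<times> real \<Rightarrow> 'a::real_normed_vector) \<Rightarrow> bool" where
  "D0 f \<longleftrightarrow> continuous_on UNIV f \<and> LD f"

lemma coord_dir_cases: "coord_dir i = coord_dir 0 \<or> coord_dir i = coord_dir 1"
  by (simp add: coord_dir_def)

lemma smooth_iff: "smooth_on UNIV f \<longleftrightarrow> (\<forall>ds. D0 (dpar ds f))"
proof -
  have *: "(\<forall>i\<in>{0,1}. \<forall>x. P (coord_dir i) x) \<longleftrightarrow> (\<forall>i x. P (coord_dir i) x)" for P :: "_ \<Rightarrow> _ \<Rightarrow> bool"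
  proof
    assume h: "\<forall>i\<in>{0,1}. \<forall>x. P (coord_dir i) x"
    show "\<forall>i x. P (coord_dir i) x"
    proof (intro allI)
      fix i x show "P (coord_dir i) x" using h coord_dir_cases[of i] by (metis insertCI)
    qed
  qed auto
  show ?thesis unfolding smooth_on_def D0_def LD_def
    using *[of "\<lambda>v x. (\<lambda>t. dpar _ f (x + t *\<^sub>R v)) differentiable (at 0)"] by simp
qed

lemma dpar_append: "dpar (ds @ es) f = dpar ds (dpar es f)"
  by (induction ds) auto

lemma partial_hvd:
  assumes "LD f"
  shows "((\<lambda>t. f (x + t *\<^sub>R coord_dir i)) has_vector_derivative partial i f x) (at 0)"
proof -
  have "(\<lambda>t. f (x + t *\<^sub>R coord_dir i)) differentiable (at 0)" using assms unfolding LD_def by blast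
  then show ?thesis unfolding partial_def by (simp add: vector_derivative_works)
qed

lemma partial_eqI:
  assumes "((\<lambda>t. f (x + t *\<^sub>R coord_dir i)) has_vector_derivative D) (at 0)"
  shows "partial i f x = D"
  using assms unfolding partial_def by (rule vector_derivative_at)

lemma ev_line: "open (U::(real\<times>real) set) \<Longrightarrow> x \<in> U \<Longrightarrow> eventually (\<lambda>t. x + t *\<^sub>R v \<in> U) (nhds (0::real))"
proof -
  assume U: "open U" "x \<in> U"
  have "open ((\<lambda>t::real. x + t *\<^sub>R v) -` U)"
    by (rule open_vimage[OF U(1)]) (auto intro!: continuous_intros)
  then show ?thesis unfolding eventually_nhds using U(2) by (intro exI[of _ "(\<lambda>t::real. x + t *\<^sub>R v) -` U"]) auto
qed

lemma partial_local:
  assumes "open U" "x \<in> U" "\<And>y. y \<in> U \<Longrightarrow> f y = g y"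
  shows "partial i f x = partial i g x"
  unfolding partial_def
  apply (rule vector_derivative_cong_eq[where A=UNIV and B=UNIV])
  using ev_line[OF assms(1,2), of "coord_dir i"] assms(3) apply (simp add: eventually_mono)
  by auto

lemma dpar_local:
  assumes "open U" "\<And>y. y \<in> U \<Longrightarrow> f y = g y" "x \<in> U"
  shows "dpar ds f x = dpar ds g x"
  using assms(3)
proof (induction ds arbitrary: x)
  case Nil then show ?case using assms(2) by simp
next
  case (Cons i ds)
  show ?case by simp (rule partial_local[OF assms(1) Cons.prems Cons.IH])
qed

lemma dpar_zero_open:
  assumes "open U" "\<And>y. y \<in> U \<Longrightarrow> f y = 0" "x \<in> U"
  shows "dpar ds f x = 0"
proof -
  have "dpar ds f x = dpar ds (\<lambda>_. 0) x" by (rule dpar_local[OF assms(1) _ assms(3)]) (use assms(2) in auto)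
  also have "dpar ds (\<lambda>_. 0::'a) = (\<lambda>_. 0)"
  proof (induction ds)
    case (Cons i ds)
    have "partial i (\<lambda>_. 0::'a) y = 0" for y by (rule partial_eqI) (rule has_vector_derivative_const)
    then have "partial i (\<lambda>_. 0::'a) = (\<lambda>_. 0)" by (rule ext)
    then show ?case using Cons by simp
  qed simp
  finally show ?thesis by simp
qed

lemma LD_add: "LD f \<Longrightarrow> LD g \<Longrightarrow> LD (\<lambda>x. f x + g x)"
  unfolding LD_def by (auto intro: differentiable_compose)

fun SMn :: "nat \<Rightarrow> (real \<times> real \<Rightarrow> 'a::real_normed_vector) \<Rightarrow> bool" where
  "SMn 0 f = D0 f"
| "SMn (Suc n) f = (D0 f \<and> (\<forall>j. SMn n (partial j f)))"

lemma SMn_D0: "SMn n f \<Longrightarrow> D0 f"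
  by (cases n) auto

lemma SMn_Suc_mono: "SMn (Suc n) f \<Longrightarrow> SMn n f"
proof (induction n arbitrary: f)
  case 0 then show ?case by simp
next
  case (Suc n) then show ?case by (metis SMn.simps(2))
qed

lemma smooth_SMn: "smooth_on UNIV f \<longleftrightarrow> (\<forall>n. SMn n f)"
proof
  assume "smooth_on UNIV f"
  then have h: "\<forall>ds. D0 (dpar ds f)" by (simp add: smooth_iff)
  have "SMn n g" if "\<forall>ds. D0 (dpar ds g)" for n and g :: "real \<times> real \<Rightarrow> 'a"
    using that
  proof (induction n arbitrary: g)
    case 0 then show ?case by (metis SMn.simps(1) dpar.simps(1))
  next
    case (Suc n)
    have "\<forall>ds. D0 (dpar ds (partial j g))" for j
      using Suc.prems by (metis dpar_append dpar.simps(1) dpar.simps(2))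
    then show ?case using Suc by (metis SMn.simps(2) dpar.simps(1))
  qed
  then show "\<forall>n. SMn n f" using h by blast
next
  assume h: "\<forall>n. SMn n f"
  have "\<forall>g. (\<forall>n. SMn n g) \<longrightarrow> D0 (dpar ds (g :: real \<times> real \<Rightarrow> 'a))" for ds
  proof (induction ds rule: rev_induct)
    case Nil then show ?case using SMn_D0 by auto
  next
    case (snoc j ds)
    show ?case
    proof (intro allI impI)
      fix g :: "real \<times> real \<Rightarrow> 'a" assume g: "\<forall>n. SMn n g"
      have "\<forall>n. SMn n (partial j g)" using g by (metis SMn.simps(2))
      then have "D0 (dpar ds (partial j g))" using snoc by blast
      then show "D0 (dpar (ds @ [j]) g)" by (simp add: dpar_append)
    qed
  qed
  then show "smooth_on UNIV f" using h by (simp add: smooth_iff)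
qed

abbreviation SM :: "(real \<times> real \<Rightarrow> 'a::real_normed_vector) \<Rightarrow> bool" where
  "SM f \<equiv> smooth_on UNIV f"

lemma SM_D0: "SM f \<Longrightarrow> D0 f"
  using smooth_SMn SMn_D0 by blast

lemma SM_cont: "SM f \<Longrightarrow> continuous_on UNIV f"
  using SM_D0 D0_def by blast

lemma SM_LD: "SM f \<Longrightarrow> LD f"
  using SM_D0 D0_def by blast

lemma SM_partial: "SM f \<Longrightarrow> SM (partial j f)"
  by (metis SMn.simps(2) smooth_SMn)

lemma SM_dpar: "SM f \<Longrightarrow> SM (dpar ds f)"
  by (induction ds) (auto intro: SM_partial)

lemma LD_D: "LD f \<Longrightarrow> (\<lambda>t. f (x + t *\<^sub>R coord_dir i)) differentiable (at 0)"
  unfolding LD_def by blast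

lemma partial_add:
  assumes "LD f" "LD g"
  shows "partial i (\<lambda>x. f x + g x) = (\<lambda>x. partial i f x + partial i g x)"
  by (rule ext, rule partial_eqI, rule has_vector_derivative_add) (use partial_hvd assms in auto)

lemma partial_diff:
  assumes "LD f" "LD g"
  shows "partial i (\<lambda>x. f x - g x) = (\<lambda>x. partial i f x - partial i g x)"
  by (rule ext, rule partial_eqI, rule has_vector_derivative_diff) (use partial_hvd assms in auto)

lemma partial_mult:
  fixes f g :: "real \<times> real \<Rightarrow> 'a::real_normed_algebra"
  assumes "LD f" "LD g"
  shows "partial i (\<lambda>x. f x * g x) = (\<lambda>x. f x * partial i g x + partial i f x * g x)"
proof (rule ext, rule partial_eqI)
  fix x
  show "((\<lambda>t. f (x + t *\<^sub>R coord_dir i) * g (x + t *\<^sub>R coord_dir i)) has_vector_derivative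
      f x * partial i g x + partial i f x * g x) (at 0)"
    using has_vector_derivative_mult[OF partial_hvd[OF assms(1), of x i] partial_hvd[OF assms(2), of x i]]
    by simp
qed

lemma partial_const: "partial i (\<lambda>x. c) = (\<lambda>x. 0)"
  by (rule ext, rule partial_eqI) (rule has_vector_derivative_const)

lemma partial_of_real:
  fixes f :: "real \<times> real \<Rightarrow> real"
  assumes "LD f"
  shows "partial i (\<lambda>x. (of_real (f x) :: 'a::real_normed_algebra_1)) = (\<lambda>x. of_real (partial i f x))"
proof (rule ext, rule partial_eqI)
  fix x
  have "((\<lambda>t. f (x + t *\<^sub>R coord_dir i)) has_field_derivative partial i f x) (at 0)"
    using partial_hvd[OF assms] by (simp add: has_real_derivative_iff_has_vector_derivative)
  then show "((\<lambda>t. (of_real (f (x + t *\<^sub>R coord_dir i)) :: 'a)) has_vector_derivative of_real (partial i f x)) (at 0)"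
    by (rule has_vector_derivative_of_real)
qed

lemma D0_add: "D0 f \<Longrightarrow> D0 g \<Longrightarrow> D0 (\<lambda>x. f x + g x)"
  unfolding D0_def LD_def by (auto intro: continuous_intros differentiable_compose)

lemma D0_diff: "D0 f \<Longrightarrow> D0 g \<Longrightarrow> D0 (\<lambda>x. f x - g x)"
  unfolding D0_def LD_def by (auto intro: continuous_intros differentiable_compose)

lemma D0_mult: "D0 f \<Longrightarrow> D0 g \<Longrightarrow> D0 (\<lambda>x. f x * (g x :: 'a::real_normed_algebra))"
  unfolding D0_def LD_def by (auto intro: continuous_intros differentiable_compose)

lemma D0_const: "D0 (\<lambda>x. c)"
  unfolding D0_def LD_def by auto

lemma D0_of_real: "D0 f \<Longrightarrow> D0 (\<lambda>x. (of_real (f x) :: 'a::real_normed_algebra_1))"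
  unfolding D0_def LD_def by (auto intro: continuous_intros differentiable_compose)

lemma D0_LD: "D0 f \<Longrightarrow> LD f" unfolding D0_def by blast

lemma SMn_add: "SMn n f \<Longrightarrow> SMn n g \<Longrightarrow> SMn n (\<lambda>x. f x + g x)"
proof (induction n arbitrary: f g)
  case 0 then show ?case by (simp add: D0_add)
next
  case (Suc n)
  then show ?case by (simp add: D0_add partial_add D0_LD)
qed

lemma SMn_diff: "SMn n f \<Longrightarrow> SMn n g \<Longrightarrow> SMn n (\<lambda>x. f x - g x)"
proof (induction n arbitrary: f g)
  case 0 then show ?case by (simp add: D0_diff)
next
  case (Suc n)
  then show ?case by (simp add: D0_diff partial_diff D0_LD)
qed

lemma SMn_const: "SMn n (\<lambda>x. c)"
  by (induction n arbitrary: c) (auto simp: D0_const partial_const)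

lemma SMn_mult: "SMn n f \<Longrightarrow> SMn n g \<Longrightarrow> SMn n (\<lambda>x. f x * (g x :: 'a::real_normed_algebra))"
proof (induction n arbitrary: f g)
  case 0 then show ?case by (simp add: D0_mult)
next
  case (Suc n)
  have "SMn n (\<lambda>x. f x * partial j g x + partial j f x * g x)" for j
    by (rule SMn_add; rule Suc.IH) (use Suc.prems SMn_Suc_mono in auto)
  then show ?case using Suc.prems by (simp add: D0_mult partial_mult D0_LD)
qed

lemma SMn_of_real: "SMn n f \<Longrightarrow> SMn n (\<lambda>x. (of_real (f x) :: 'a::real_normed_algebra_1))"
proof (induction n arbitrary: f)
  case 0 then show ?case by (simp add: D0_of_real)
next
  case (Suc n)
  then show ?case by (simp add: D0_of_real partial_of_real D0_LD)
qed

lemma SM_add: "SM f \<Longrightarrow> SM g \<Longrightarrow> SM (\<lambda>x. f x + g x)"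
  by (simp add: smooth_SMn SMn_add)
lemma SM_diff: "SM f \<Longrightarrow> SM g \<Longrightarrow> SM (\<lambda>x. f x - g x)"
  by (simp add: smooth_SMn SMn_diff)
lemma SM_mult: "SM f \<Longrightarrow> SM g \<Longrightarrow> SM (\<lambda>x. f x * (g x :: 'a::real_normed_algebra))"
  by (simp add: smooth_SMn SMn_mult)
lemma SM_const: "SM (\<lambda>x. c)"
  by (simp add: smooth_SMn SMn_const)
lemma SM_of_real: "SM f \<Longrightarrow> SM (\<lambda>x. (of_real (f x) :: 'a::real_normed_algebra_1))"
  by (simp add: smooth_SMn SMn_of_real)
lemma SM_cmult: "SM f \<Longrightarrow> SM (\<lambda>x. c * (f x :: 'a::real_normed_algebra))"
  using SM_mult[OF SM_const] by blast

lemma SM_snd: "SM (snd :: real \<times> real \<Rightarrow> real)"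
proof -
  have D: "D0 (snd :: real \<times> real \<Rightarrow> real)"
    unfolding D0_def LD_def by (auto intro!: continuous_intros derivative_intros)
  have p: "partial j snd = (\<lambda>x::real\<times>real. snd (coord_dir j))" for j
  proof (rule ext, rule partial_eqI)
    fix x :: "real \<times> real"
    have "((\<lambda>t. snd x + t * snd (coord_dir j)) has_field_derivative snd (coord_dir j)) (at 0)"
      by (auto intro!: derivative_eq_intros)
    then have "((\<lambda>t. snd x + t * snd (coord_dir j)) has_vector_derivative snd (coord_dir j)) (at 0)"
      by (simp add: has_real_derivative_iff_has_vector_derivative)
    then show "((\<lambda>t. snd (x + t *\<^sub>R coord_dir j)) has_vector_derivative snd (coord_dir j)) (at 0)"
      by simp
  qed
  have "SMn n (snd :: real \<times> real \<Rightarrow> real)" for n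
    by (cases n) (auto simp: D p SMn_const)
  then show ?thesis by (simp add: smooth_SMn)
qed

lemma mag_pot_fun: "mag_pot a1 a2 b j = (if j = 0 then (\<lambda>x. a1 x - b * snd x) else a2)"
  by (auto simp: fun_eq_iff mag_pot_def)

lemma SM_mag_pot: "SM a1 \<Longrightarrow> SM a2 \<Longrightarrow> SM (mag_pot a1 a2 b j)"
  unfolding mag_pot_fun by (auto intro!: SM_diff SM_cmult SM_snd)

lemma Pcomp_fun: "Pcomp a1 a2 b j f = (\<lambda>x. - \<i> * partial j f x - of_real (mag_pot a1 a2 b j x) * f x)"
  by (rule ext) (simp add: Pcomp_def)

lemma Hop_fun: "Hop V a1 a2 b f = (\<lambda>x. Pcomp a1 a2 b 0 (Pcomp a1 a2 b 0 f) x
       + Pcomp a1 a2 b 1 (Pcomp a1 a2 b 1 f) x + of_real (V x) * f x)"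
  by (rule ext) (simp add: Hop_def)

lemma SM_Pcomp: "SM a1 \<Longrightarrow> SM a2 \<Longrightarrow> SM f \<Longrightarrow> SM (Pcomp a1 a2 b j f)"
  unfolding Pcomp_fun
  by (intro SM_diff SM_cmult SM_mult SM_of_real SM_partial SM_mag_pot)

lemma SM_Hop: "SM V \<Longrightarrow> SM a1 \<Longrightarrow> SM a2 \<Longrightarrow> SM f \<Longrightarrow> SM (Hop V a1 a2 b f)"
  unfolding Hop_fun
  by (intro SM_add SM_mult SM_of_real SM_Pcomp)

lemma Pcomp_diff: "LD f \<Longrightarrow> LD g \<Longrightarrow>
  Pcomp a1 a2 b j (\<lambda>x. f x - g x) = (\<lambda>x. Pcomp a1 a2 b j f x - Pcomp a1 a2 b j g x)"
  unfolding Pcomp_fun by (simp add: partial_diff algebra_simps)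

lemma Pcomp_cmult: "LD f \<Longrightarrow>
  Pcomp a1 a2 b j (\<lambda>x. c * f x) = (\<lambda>x. c * Pcomp a1 a2 b j f x)"
  unfolding Pcomp_fun by (simp add: partial_mult D0_LD[OF D0_const] partial_const algebra_simps)

lemma Pcomp_eta: "LD (eta :: real \<times> real \<Rightarrow> real) \<Longrightarrow> LD f \<Longrightarrow>
  Pcomp a1 a2 b j (\<lambda>x. of_real (eta x) * f x)
    = (\<lambda>x. of_real (eta x) * Pcomp a1 a2 b j f x - \<i> * of_real (partial j eta x) * f x)"
proof -
  assume e: "LD eta" and f: "LD f"
  have "LD (\<lambda>x. complex_of_real (eta x))" using e unfolding LD_def
    by (auto intro: differentiable_compose)
  then show ?thesis unfolding Pcomp_fun
    by (simp add: partial_mult f partial_of_real[OF e] algebra_simps fun_eq_iff)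
qed

lemma Hop_diff:
  assumes "SM a1" "SM a2" "SM f" "SM g"
  shows "Hop V a1 a2 b (\<lambda>x. f x - g x) = (\<lambda>x. Hop V a1 a2 b f x - Hop V a1 a2 b g x)"
proof -
  have L: "LD f" "LD g" "LD (Pcomp a1 a2 b j f)" "LD (Pcomp a1 a2 b j g)" for j
    using assms by (auto intro!: SM_LD SM_Pcomp)
  show ?thesis unfolding Hop_fun
    by (simp add: Pcomp_diff L algebra_simps)
qed

lemma Hop_eta:
  assumes a: "SM a1" "SM a2" and e: "SM (eta :: real \<times> real \<Rightarrow> real)" and f: "SM f"
    and e0: "partial 0 eta = (\<lambda>_. 0)"
  shows "Hop V a1 a2 b (\<lambda>x. of_real (eta x) * f x) =
    (\<lambda>x. of_real (eta x) * Hop V a1 a2 b f x - 2 * \<i> * of_real (partial 1 eta x) * Pcomp a1 a2 b 1 f x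
        - of_real (partial 1 (partial 1 eta) x) * f x)"
proof -
  let ?P = "Pcomp a1 a2 b"
  define e1 where "e1 = partial 1 eta"
  have Le: "LD eta" "LD e1" using e SM_partial SM_LD unfolding e1_def by blast+
  have Lf: "LD f" "LD (?P j f)" "LD (?P j (?P j f))" "LD (\<lambda>x. \<i> * f x)" for j
    using f a by (auto intro!: SM_LD SM_Pcomp SM_cmult)
  have h0: "?P 0 (\<lambda>x. of_real (eta x) * f x) = (\<lambda>x. of_real (eta x) * ?P 0 f x)"
    by (simp add: Pcomp_eta Le Lf e0)
  have h00: "?P 0 (?P 0 (\<lambda>x. of_real (eta x) * f x)) = (\<lambda>x. of_real (eta x) * ?P 0 (?P 0 f) x)"
    unfolding h0 by (simp add: Pcomp_eta Le Lf e0)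
  have h1: "?P 1 (\<lambda>x. of_real (eta x) * f x) =
     (\<lambda>x. of_real (eta x) * ?P 1 f x - of_real (e1 x) * (\<i> * f x))"
    unfolding Pcomp_eta[OF Le(1) Lf(1)] by (simp add: e1_def algebra_simps fun_eq_iff)
  have LL: "LD (\<lambda>x. complex_of_real (eta x) * ?P 1 f x)" "LD (\<lambda>x. complex_of_real (e1 x) * (\<i> * f x))"
    using e f a unfolding e1_def by (auto intro!: SM_LD SM_mult SM_of_real SM_Pcomp SM_cmult SM_partial)
  have h11: "?P 1 (?P 1 (\<lambda>x. of_real (eta x) * f x)) =
     (\<lambda>x. of_real (eta x) * ?P 1 (?P 1 f) x - 2 * \<i> * of_real (e1 x) * ?P 1 f x
        - of_real (partial 1 e1 x) * f x)"
    unfolding h1 Pcomp_diff[OF LL] Pcomp_eta[OF Le(1) Lf(2)] Pcomp_eta[OF Le(2) Lf(4)] Pcomp_cmult[OF Lf(1)]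
    by (simp add: e1_def algebra_simps fun_eq_iff)
  show ?thesis unfolding Hop_fun h00 h11 e1_def by (simp add: algebra_simps fun_eq_iff)
qed

lemma cont_supp_integrable:
  fixes f :: "'a::euclidean_space \<Rightarrow> 'b::{banach, second_countable_topology}"
  assumes "continuous_on UNIV f" "\<And>x. norm x > R \<Longrightarrow> f x = 0"
  shows "integrable lborel f"
proof -
  have "integrable lborel (\<lambda>x. indicator (cball 0 R) x *\<^sub>R f x)"
    by (rule borel_integrable_compact) (auto intro: continuous_on_subset[OF assms(1)])
  moreover have "(\<lambda>x. indicator (cball 0 R) x *\<^sub>R f x) = f"
    using assms(2) by (auto simp: fun_eq_iff indicator_def)
  ultimately show ?thesis by simp
qed

lemma ftc_zero:
  fixes g g' :: "real \<Rightarrow> real"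
  assumes d: "\<And>s. (g has_real_derivative g' s) (at s)" and c: "continuous_on UNIV g'"
    and z: "\<And>s. \<bar>s\<bar> > R \<Longrightarrow> g s = 0" "\<And>s. \<bar>s\<bar> > R \<Longrightarrow> g' s = 0"
  shows "integral\<^sup>L lborel g' = 0"
proof -
  define a where "a = - (\<bar>R\<bar> + 1)"
  define b where "b = \<bar>R\<bar> + 1"
  have "integral\<^sup>L lborel (\<lambda>x. indicator {a .. b} x *\<^sub>R g' x) = g b - g a"
  proof (rule integral_FTC_atLeastAtMost)
    show "a \<le> b" unfolding a_def b_def by simp
    show "(g has_vector_derivative g' x) (at x within {a..b})" for x
      using d[of x] by (simp add: has_real_derivative_iff_has_vector_derivative has_vector_derivative_at_within)
    show "continuous_on {a..b} g'" using c by (rule continuous_on_subset) simp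
  qed
  also have "\<dots> = 0" using z(1)[of a] z(1)[of b] unfolding a_def b_def by simp
  moreover have "(\<lambda>x. indicator {a .. b} x *\<^sub>R g' x) = g'"
  proof
    fix x show "indicator {a .. b} x *\<^sub>R g' x = g' x"
    proof (cases "x \<in> {a..b}")
      case False
      then have "\<bar>x\<bar> > R" unfolding a_def b_def by auto
      then show ?thesis using z(2) by simp
    qed simp
  qed
  ultimately show ?thesis by simp
qed

lemma ibp:
  fixes F F' :: "real \<times> real \<Rightarrow> real"
  assumes d: "\<And>x. ((\<lambda>t. F (x + t *\<^sub>R coord_dir j)) has_vector_derivative F' x) (at 0)"
    and c: "continuous_on UNIV F'"
    and z: "\<And>x. norm x > R \<Longrightarrow> F x = 0" "\<And>x. norm x > R \<Longrightarrow> F' x = 0"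
  shows "integral\<^sup>L lborel F' = 0"
proof -
  have int: "integrable (lborel \<Otimes>\<^sub>M lborel) F'"
    unfolding lborel_prod by (rule cont_supp_integrable[OF c z(2)])
  have cF: "continuous_on UNIV (\<lambda>s. F' (u, s))" "continuous_on UNIV (\<lambda>s. F' (s, u))" for u
    by (auto intro!: continuous_on_compose2[OF c] continuous_intros)
  show ?thesis
  proof (cases "j = 0")
    case False
    then have e: "coord_dir j = (0, 1)" by (simp add: coord_dir_def)
    have inner: "integral\<^sup>L lborel (\<lambda>s. F' (u, s)) = 0" for u
    proof (rule ftc_zero[where g = "\<lambda>s. F (u, s)" and R = R])
      show "((\<lambda>s. F (u, s)) has_real_derivative F' (u, s)) (at s)" for s
      proof -
        have "((\<lambda>t. F (u, t + s)) has_real_derivative F' (u, s)) (at 0)"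
          using d[of "(u, s)"] by (simp add: e has_real_derivative_iff_has_vector_derivative add.commute)
        then show ?thesis using DERIV_shift[of "\<lambda>s. F (u, s)" "F' (u, s)" 0 s] by simp
      qed
      show "continuous_on UNIV (\<lambda>s. F' (u, s))" by (rule cF)
      show "F (u, s) = 0" if "\<bar>s\<bar> > R" for s using z(1) that norm_snd_le[of s u] by force
      show "F' (u, s) = 0" if "\<bar>s\<bar> > R" for s using z(2) that norm_snd_le[of s u] by force
    qed
    have "integral\<^sup>L lborel F' = integral\<^sup>L (lborel \<Otimes>\<^sub>M lborel) F'" by (simp add: lborel_prod)
    also have "\<dots> = (\<integral>u. (\<integral>s. F' (u, s) \<partial>lborel) \<partial>lborel)"
      by (rule lborel_pair.integral_fst'[OF int, symmetric])
    also have "\<dots> = 0" by (simp add: inner)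
    finally show ?thesis .
  next
    case True
    then have e: "coord_dir j = (1, 0)" by (simp add: coord_dir_def)
    have inner: "integral\<^sup>L lborel (\<lambda>s. F' (s, u)) = 0" for u
    proof (rule ftc_zero[where g = "\<lambda>s. F (s, u)" and R = R])
      show "((\<lambda>s. F (s, u)) has_real_derivative F' (s, u)) (at s)" for s
      proof -
        have "((\<lambda>t. F (t + s, u)) has_real_derivative F' (s, u)) (at 0)"
          using d[of "(s, u)"] by (simp add: e has_real_derivative_iff_has_vector_derivative add.commute)
        then show ?thesis using DERIV_shift[of "\<lambda>s. F (s, u)" "F' (s, u)" 0 s] by simp
      qed
      show "continuous_on UNIV (\<lambda>s. F' (s, u))" by (rule cF)
      show "F (s, u) = 0" if "\<bar>s\<bar> > R" for s using z(1) that norm_fst_le[of s u] by force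
      show "F' (s, u) = 0" if "\<bar>s\<bar> > R" for s using z(2) that norm_fst_le[of s u] by force
    qed
    have int': "integrable (lborel \<Otimes>\<^sub>M lborel) (case_prod (\<lambda>x y. F' (x, y)))"
      using int by simp
    have "integral\<^sup>L lborel F' = integral\<^sup>L (lborel \<Otimes>\<^sub>M lborel) (case_prod (\<lambda>x y. F' (x, y)))"
      by (simp add: lborel_prod)
    also have "\<dots> = (\<integral>u. (\<integral>s. F' (s, u) \<partial>lborel) \<partial>lborel)"
      by (rule lborel_pair.integral_snd[OF int', symmetric])
    also have "\<dots> = 0" by (simp add: inner)
    finally show ?thesis .
  qed
qed

lemma open_norm_gt: "open {y::real\<times>real. norm y > R}"
  by (rule open_Collect_less) (auto intro: continuous_intros)

lemma supp_partial: "(\<And>y. norm y > R \<Longrightarrow> f y = 0) \<Longrightarrow> norm y > R \<Longrightarrow> partial j f y = 0"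
proof -
  assume z: "\<And>y. norm y > R \<Longrightarrow> f y = 0" and y: "norm y > R"
  have "partial j f y = dpar [j] f y" by simp
  also have "\<dots> = 0" by (rule dpar_zero_open[OF open_norm_gt[of R]]) (simp_all add: z y)
  finally show ?thesis .
qed

lemma supp_Pcomp: "(\<And>y. norm y > R \<Longrightarrow> f y = 0) \<Longrightarrow> norm y > R \<Longrightarrow> Pcomp a1 a2 b j f y = 0"
proof -
  assume z: "\<And>y. norm y > R \<Longrightarrow> f y = 0" and y: "norm y > R"
  show ?thesis unfolding Pcomp_def by (simp add: supp_partial[OF z y] z[OF y])
qed

lemma supp_Hop: "(\<And>y. norm y > R \<Longrightarrow> f y = 0) \<Longrightarrow> norm y > R \<Longrightarrow> Hop V a1 a2 b f y = 0"
proof -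
  assume z: "\<And>y. norm y > R \<Longrightarrow> f y = 0" and y: "norm y > R"
  have z1: "\<And>y. norm y > R \<Longrightarrow> Pcomp a1 a2 b j f y = 0" for j by (rule supp_Pcomp[OF z])
  show ?thesis unfolding Hop_def using supp_Pcomp[OF z1 y] z y by simp
qed

lemma cid: "Im (w * cnj p + q * cnj u) = Re ((-\<i> * q - of_real a * w) * cnj u) - (cmod w)\<^sup>2"
  if "w = -\<i> * p - of_real a * u"
  unfolding that cmod_power2 by (simp add: power2_eq_square algebra_simps)

lemma energy_pt:
  assumes a: "SM a1" "SM a2" and f: "SM f"
  shows "((\<lambda>t. Im (Pcomp a1 a2 b j f (x + t *\<^sub>R coord_dir j) * cnj (f (x + t *\<^sub>R coord_dir j))))
    has_vector_derivative (Re (Pcomp a1 a2 b j (Pcomp a1 a2 b j f) x * cnj (f x)) - (cmod (Pcomp a1 a2 b j f x))\<^sup>2)) (at 0)"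
proof -
  let ?w = "Pcomp a1 a2 b j f"
  have Lw: "LD ?w" and Lf: "LD f" using a f by (auto intro!: SM_LD SM_Pcomp)
  have h: "((\<lambda>t. ?w (x + t *\<^sub>R coord_dir j) * cnj (f (x + t *\<^sub>R coord_dir j))) has_vector_derivative
      ?w x * cnj (partial j f x) + partial j ?w x * cnj (f x)) (at 0)"
    using has_vector_derivative_mult[OF partial_hvd[OF Lw, of x j] has_vector_derivative_cnj[OF partial_hvd[OF Lf, of x j]]]
    by simp
  note h2 = has_field_derivative_Im[OF h]
  have eq: "Im (?w x * cnj (partial j f x) + partial j ?w x * cnj (f x)) =
    Re (Pcomp a1 a2 b j ?w x * cnj (f x)) - (cmod (?w x))\<^sup>2"
    unfolding Pcomp_def[of a1 a2 b j ?w x]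
    by (rule cid) (simp add: Pcomp_def)
  show ?thesis using h2 unfolding eq by (simp add: has_real_derivative_iff_has_vector_derivative)
qed

lemma energy_int:
  assumes a: "SM a1" "SM a2" and f: "SM f" and z: "\<And>y. norm y > R \<Longrightarrow> f y = 0"
  shows "integral\<^sup>L lborel (\<lambda>x. Re (Pcomp a1 a2 b j (Pcomp a1 a2 b j f) x * cnj (f x))
            - (cmod (Pcomp a1 a2 b j f x))\<^sup>2) = 0"
proof (rule ibp[where F = "\<lambda>x. Im (Pcomp a1 a2 b j f x * cnj (f x))" and j = j and R = R])
  show "((\<lambda>t. Im (Pcomp a1 a2 b j f (x + t *\<^sub>R coord_dir j) * cnj (f (x + t *\<^sub>R coord_dir j)))) has_vector_derivative
      Re (Pcomp a1 a2 b j (Pcomp a1 a2 b j f) x * cnj (f x)) - (cmod (Pcomp a1 a2 b j f x))\<^sup>2) (at 0)" for x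
    by (rule energy_pt[OF a f])
  have c: "continuous_on UNIV (Pcomp a1 a2 b j (Pcomp a1 a2 b j f))" "continuous_on UNIV (Pcomp a1 a2 b j f)"
     "continuous_on UNIV f"
    using a f by (auto intro!: SM_cont SM_Pcomp)
  show "continuous_on UNIV (\<lambda>x. Re (Pcomp a1 a2 b j (Pcomp a1 a2 b j f) x * cnj (f x))
            - (cmod (Pcomp a1 a2 b j f x))\<^sup>2)"
    using c by (intro continuous_intros) auto
  have z1: "\<And>y. norm y > R \<Longrightarrow> Pcomp a1 a2 b j f y = 0" by (rule supp_Pcomp[OF z])
  show "Im (Pcomp a1 a2 b j f x * cnj (f x)) = 0" if "norm x > R" for x using z[OF that] by simp
  show "Re (Pcomp a1 a2 b j (Pcomp a1 a2 b j f) x * cnj (f x)) - (cmod (Pcomp a1 a2 b j f x))\<^sup>2 = 0"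
    if "norm x > R" for x using z[OF that] z1[OF that] by simp
qed

lemma Re_mult_cnj_le: "Re (z * cnj w) \<le> (cmod z)\<^sup>2 / 2 + (cmod w)\<^sup>2 / 2"
proof -
  have "Re (z * cnj w) \<le> cmod (z * cnj w)" by (rule complex_Re_le_cmod)
  also have "\<dots> = cmod z * cmod w" by (simp add: norm_mult)
  also have "\<dots> \<le> (cmod z)\<^sup>2 / 2 + (cmod w)\<^sup>2 / 2"
    using sum_squares_bound[of "cmod z" "cmod w"] by (simp add: power2_eq_square field_simps)
  finally show ?thesis .
qed

lemma energy_bound:
  assumes a: "SM a1" "SM a2" and V: "SM V" and f: "SM f" and z: "\<And>y. norm y > R \<Longrightarrow> f y = 0"
    and M: "\<And>x. \<bar>V x\<bar> \<le> M"
  shows "(\<integral>\<^sup>+x. ennreal ((cmod (Pcomp a1 a2 b 1 f x))\<^sup>2) \<partial>lborel) \<le>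
         (\<integral>\<^sup>+x. ennreal ((cmod (Hop V a1 a2 b f x))\<^sup>2 / 2 + (1/2 + M) * (cmod (f x))\<^sup>2) \<partial>lborel)"
proof -
  let ?P = "Pcomp a1 a2 b"
  let ?H = "Hop V a1 a2 b f"
  define E where "E j x = Re (?P j (?P j f) x * cnj (f x)) - (cmod (?P j f x))\<^sup>2" for j x
  define L where "L x = (cmod (?P 1 f x))\<^sup>2" for x
  define Q where "Q x = (cmod (?H x))\<^sup>2 / 2 + (1/2 + M) * (cmod (f x))\<^sup>2" for x
  have c: "continuous_on UNIV (?P j (?P j f))" "continuous_on UNIV (?P j f)"
     "continuous_on UNIV f" "continuous_on UNIV ?H" "continuous_on UNIV V" for j
    using a f V by (auto intro!: SM_cont SM_Pcomp SM_Hop)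
  have z1: "\<And>y. norm y > R \<Longrightarrow> ?P j f y = 0" for j by (rule supp_Pcomp[OF z])
  have z2: "\<And>y. norm y > R \<Longrightarrow> ?P j (?P j f) y = 0" for j by (rule supp_Pcomp[OF z1])
  have zH: "\<And>y. norm y > R \<Longrightarrow> ?H y = 0" by (rule supp_Hop[OF z])
  have intE: "integrable lborel (E j)" for j
    unfolding E_def
    by (rule cont_supp_integrable[where R = R]) (use c z z1 z2 in \<open>auto intro!: continuous_intros\<close>)
  have intL: "integrable lborel L"
    unfolding L_def
    by (rule cont_supp_integrable[where R = R]) (use c z1 in \<open>auto intro!: continuous_intros\<close>)
  have intQ: "integrable lborel Q"
    unfolding Q_def
    by (rule cont_supp_integrable[where R = R]) (use c z zH in \<open>auto intro!: continuous_intros\<close>)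
  have E0: "integral\<^sup>L lborel (E j) = 0" for j
    unfolding E_def by (rule energy_int[OF a f z])
  have pt: "L x \<le> Q x - E 0 x - E 1 x" for x
  proof -
    have fc: "f x * cnj (f x) = of_real ((cmod (f x))\<^sup>2)" by (rule complex_norm_square[symmetric])
    have HRe: "Re (?H x * cnj (f x)) = Re (?P 0 (?P 0 f) x * cnj (f x)) + Re (?P 1 (?P 1 f) x * cnj (f x))
        + V x * (cmod (f x))\<^sup>2"
      unfolding Hop_def by (simp add: distrib_right fc mult.assoc)
    have "Re (?H x * cnj (f x)) \<le> (cmod (?H x))\<^sup>2 / 2 + (cmod (f x))\<^sup>2 / 2" by (rule Re_mult_cnj_le)
    moreover have "- M * (cmod (f x))\<^sup>2 \<le> V x * (cmod (f x))\<^sup>2"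
      using M[of x] by (intro mult_right_mono) auto
    moreover have "0 \<le> (cmod (?P 0 f x))\<^sup>2" by simp
    moreover have "(1/2 + M) * (cmod (f x))\<^sup>2 = (cmod (f x))\<^sup>2 / 2 + M * (cmod (f x))\<^sup>2"
      by (simp add: algebra_simps)
    moreover have "- M * (cmod (f x))\<^sup>2 = - (M * (cmod (f x))\<^sup>2)" by simp
    ultimately show ?thesis unfolding L_def Q_def E_def using HRe by linarith
  qed
  have "integral\<^sup>L lborel L \<le> integral\<^sup>L lborel (\<lambda>x. Q x - E 0 x - E 1 x)"
    by (rule integral_mono) (use intE intL intQ pt in auto)
  also have "\<dots> = integral\<^sup>L lborel Q"
    using intE intQ E0 by simp
  finally have le: "integral\<^sup>L lborel L \<le> integral\<^sup>L lborel Q" .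
  have "(\<integral>\<^sup>+x. ennreal (L x) \<partial>lborel) = ennreal (integral\<^sup>L lborel L)"
    by (rule nn_integral_eq_integral[OF intL]) (simp add: L_def)
  also have "\<dots> \<le> ennreal (integral\<^sup>L lborel Q)" using le by (rule ennreal_leI)
  also have "\<dots> = (\<integral>\<^sup>+x. ennreal (Q x) \<partial>lborel)"
  proof -
    have "M \<ge> 0" using M[of 0] by simp
    then show ?thesis
      by (intro nn_integral_eq_integral[OF intQ, symmetric] AE_I2) (simp add: Q_def)
  qed
  finally show ?thesis unfolding L_def Q_def .
qed

lemma amgm_d: "2 * d \<le> (1/2::real)^k + 2^k * d\<^sup>2"
proof -
  have t: "(2::real)^k > 0" by simp
  have "(1/2::real)^k = 1 / 2^k" by (simp add: power_divide)
  moreover have "2 * d \<le> 1 / 2^k + 2^k * d\<^sup>2"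
  proof -
    have "0 \<le> (1 - 2^k * d)\<^sup>2 / (2::real)^k" using t by simp
    also have "(1 - 2^k * d)\<^sup>2 / (2::real)^k = 1 / 2^k + 2^k * d\<^sup>2 - 2 * d"
      using t by (simp add: field_simps power2_eq_square)
    finally show ?thesis by simp
  qed
  ultimately show ?thesis by simp
qed

lemma L2_complete:
  fixes u :: "nat \<Rightarrow> 'a \<Rightarrow> complex" and c :: "nat \<Rightarrow> ennreal"
  assumes meas[measurable]: "\<And>n. u n \<in> borel_measurable M"
    and c: "c \<longlonglongrightarrow> 0"
    and cauchy: "\<And>m n. (\<integral>\<^sup>+x. ennreal ((cmod (u n x - u m x))\<^sup>2) \<partial>M) \<le> c n + c m"
  shows "\<exists>r f. strict_mono r \<and> f \<in> borel_measurable M \<and>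
     (\<lambda>k. \<integral>\<^sup>+x. ennreal ((cmod (u (r k) x - f x))\<^sup>2) \<partial>M) \<longlonglongrightarrow> 0"
proof -
  have "\<forall>k. \<exists>N. \<forall>n\<ge>N. c n < ennreal ((1/16)^k)"
  proof
    fix k :: nat
    have "eventually (\<lambda>n. c n < ennreal ((1/16)^k)) sequentially"
      by (rule order_tendstoD(2)[OF c]) simp
    then show "\<exists>N. \<forall>n\<ge>N. c n < ennreal ((1/16)^k)" by (simp add: eventually_sequentially)
  qed
  then obtain N where N: "\<And>k n. n \<ge> N k \<Longrightarrow> c n < ennreal ((1/16)^k)" by metis
  define r where "r k = k + (\<Sum>i\<le>k. N i)" for k
  have r: "strict_mono r" unfolding strict_mono_Suc_iff r_def by simp
  have rN: "r k \<ge> N k" for k unfolding r_def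
    by (rule trans_le_add2, rule member_le_sum) auto
  have cr: "c (r k) < ennreal ((1/16)^k)" for k using N rN by blast
  define v where "v k = u (r k)" for k
  define d where "d k x = v (Suc k) x - v k x" for k x
  have [measurable]: "v k \<in> borel_measurable M" "d k \<in> borel_measurable M" for k
    unfolding v_def d_def by measurable
  have Id: "(\<integral>\<^sup>+x. ennreal ((cmod (d k x))\<^sup>2) \<partial>M) \<le> ennreal (2 * (1/16)^k)" for k
  proof -
    have "(\<integral>\<^sup>+x. ennreal ((cmod (d k x))\<^sup>2) \<partial>M) \<le> c (r (Suc k)) + c (r k)"
      using cauchy unfolding d_def v_def by blast
    also have "\<dots> \<le> ennreal ((1/16)^(Suc k)) + ennreal ((1/16)^k)"
      using cr[of k] cr[of "Suc k"] by (intro add_mono) auto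
    also have "\<dots> \<le> ennreal ((1/16)^k) + ennreal ((1/16)^k)"
      by (intro add_mono ennreal_leI) (auto simp: power_le_one)
    also have "\<dots> = ennreal (2 * (1/16)^k)" by (simp add: ennreal_plus[symmetric] del: ennreal_plus)
    finally show ?thesis .
  qed
  define S where "S x = (\<Sum>k. ennreal (2^k * (cmod (d k x))\<^sup>2))" for x
  have [measurable]: "S \<in> borel_measurable M" unfolding S_def by measurable
  have "(\<integral>\<^sup>+x. S x \<partial>M) = (\<Sum>k. \<integral>\<^sup>+x. ennreal (2^k * (cmod (d k x))\<^sup>2) \<partial>M)"
    unfolding S_def by (rule nn_integral_suminf) measurable
  also have "\<dots> \<le> (\<Sum>k. ennreal (2 * (1/8)^k))"
  proof (rule suminf_le)
    fix k
    have "(\<integral>\<^sup>+x. ennreal (2^k * (cmod (d k x))\<^sup>2) \<partial>M) = ennreal (2^k) * (\<integral>\<^sup>+x. ennreal ((cmod (d k x))\<^sup>2) \<partial>M)"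
      by (subst nn_integral_cmult[symmetric]) (auto simp: ennreal_mult)
    also have "\<dots> \<le> ennreal (2^k) * ennreal (2 * (1/16)^k)" by (intro mult_left_mono Id) auto
    also have "\<dots> = ennreal (2 * (1/8)^k)"
      by (simp add: ennreal_mult[symmetric] power_divide field_simps power_mult_distrib[symmetric]
          del: ennreal_mult)
    finally show "(\<integral>\<^sup>+x. ennreal (2^k * (cmod (d k x))\<^sup>2) \<partial>M) \<le> ennreal (2 * (1/8)^k)" .
  qed auto
  also have "\<dots> = ennreal (\<Sum>k. 2 * (1/8)^k)"
    by (rule suminf_ennreal2) (auto intro!: summable_mult summable_geometric)
  also have "\<dots> < \<infinity>" by simp
  finally have "(\<integral>\<^sup>+x. S x \<partial>M) \<noteq> \<infinity>" by simp
  then have AES: "AE x in M. S x \<noteq> \<infinity>" by (intro nn_integral_PInf_AE) auto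
  define f where "f x = (if S x = \<infinity> then 0 else v 0 x + (\<Sum>k. d k x))" for x
  have fm[measurable]: "f \<in> borel_measurable M" unfolding f_def by measurable
  have conv: "(\<lambda>k. v k x) \<longlonglongrightarrow> f x" if Sx: "S x \<noteq> \<infinity>" for x
  proof -
    have sq: "summable (\<lambda>k. 2^k * (cmod (d k x))\<^sup>2)"
      using Sx summable_iff_suminf_neq_top[of "\<lambda>k. 2^k * (cmod (d k x))\<^sup>2"] unfolding S_def by auto
    have "summable (\<lambda>k. ((1/2)^k + 2^k * (cmod (d k x))\<^sup>2) / 2)"
      by (intro summable_divide summable_add summable_geometric sq) simp
    then have "summable (\<lambda>k. norm (d k x))"
    proof (rule summable_comparison_test'[where N = 0])
      show "norm (norm (d n x)) \<le> ((1/2)^n + 2^n * (cmod (d n x))\<^sup>2) / 2" for n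
        using amgm_d[of "cmod (d n x)" n] by simp
    qed
    then have sd: "summable (\<lambda>k. d k x)" by (rule summable_norm_cancel)
    have "(\<lambda>n. v 0 x + (\<Sum>k<n. d k x)) \<longlonglongrightarrow> v 0 x + (\<Sum>k. d k x)"
      by (intro tendsto_add tendsto_const summable_LIMSEQ sd)
    moreover have "v 0 x + (\<Sum>k<n. d k x) = v n x" for n
      unfolding d_def using sum_lessThan_telescope[of "\<lambda>k. v k x" n] by simp
    ultimately show ?thesis using Sx unfolding f_def by simp
  qed
  have bound: "(\<integral>\<^sup>+x. ennreal ((cmod (v k x - f x))\<^sup>2) \<partial>M) \<le> c (r k)" for k
  proof -
    have "AE x in M. ennreal ((cmod (v k x - f x))\<^sup>2) = liminf (\<lambda>m. ennreal ((cmod (v k x - v m x))\<^sup>2))"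
      using AES
    proof (rule AE_mp, intro AE_I2 impI)
      fix x assume "S x \<noteq> \<infinity>"
      then have "(\<lambda>m. v m x) \<longlonglongrightarrow> f x" by (rule conv)
      then have L: "(\<lambda>m. ennreal ((cmod (v k x - v m x))\<^sup>2)) \<longlonglongrightarrow> ennreal ((cmod (v k x - f x))\<^sup>2)"
        by (intro tendsto_ennrealI tendsto_intros)
      show "ennreal ((cmod (v k x - f x))\<^sup>2) = liminf (\<lambda>m. ennreal ((cmod (v k x - v m x))\<^sup>2))"
        using lim_imp_Liminf[OF _ L] by simp
    qed
    then have "(\<integral>\<^sup>+x. ennreal ((cmod (v k x - f x))\<^sup>2) \<partial>M) =
        (\<integral>\<^sup>+x. liminf (\<lambda>m. ennreal ((cmod (v k x - v m x))\<^sup>2)) \<partial>M)"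
      by (rule nn_integral_cong_AE)
    also have "\<dots> \<le> liminf (\<lambda>m. \<integral>\<^sup>+x. ennreal ((cmod (v k x - v m x))\<^sup>2) \<partial>M)"
      by (rule nn_integral_liminf) measurable
    also have "\<dots> \<le> liminf (\<lambda>m. c (r k) + c (r m))"
      by (intro Liminf_mono always_eventually allI) (use cauchy in \<open>simp add: v_def\<close>)
    also have "\<dots> = c (r k)"
    proof -
      have "(\<lambda>m. c (r m)) \<longlonglongrightarrow> 0" using LIMSEQ_subseq_LIMSEQ[OF c r] by (simp add: comp_def)
      then have "(\<lambda>m. c (r k) + c (r m)) \<longlonglongrightarrow> c (r k) + 0" by (intro tendsto_add tendsto_const)
      then show ?thesis by (simp add: lim_imp_Liminf)
    qed
    finally show ?thesis .
  qed
  have "(\<lambda>k. \<integral>\<^sup>+x. ennreal ((cmod (v k x - f x))\<^sup>2) \<partial>M) \<longlonglongrightarrow> 0"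
  proof (rule tendsto_sandwich[of "\<lambda>_. 0" _ _ "\<lambda>k. c (r k)"])
    show "(\<lambda>k. c (r k)) \<longlonglongrightarrow> 0" using LIMSEQ_subseq_LIMSEQ[OF c r] by (simp add: comp_def)
  qed (auto intro!: always_eventually bound)
  then show ?thesis using r fm unfolding v_def by blast
qed

lemma zero_open_Pcomp: "open U \<Longrightarrow> (\<And>y. y \<in> U \<Longrightarrow> f y = 0) \<Longrightarrow> x \<in> U \<Longrightarrow> Pcomp a1 a2 b j f x = 0"
proof -
  assume U: "open U" and z: "\<And>y. y \<in> U \<Longrightarrow> f y = 0" and x: "x \<in> U"
  have "partial j f x = dpar [j] f x" by simp
  also have "\<dots> = 0" by (rule dpar_zero_open[OF U z x])
  finally show ?thesis unfolding Pcomp_def by (simp add: z[OF x])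
qed

lemma zero_open_Hop: "open U \<Longrightarrow> (\<And>y. y \<in> U \<Longrightarrow> f y = 0) \<Longrightarrow> x \<in> U \<Longrightarrow> Hop V a1 a2 b f x = 0"
proof -
  assume U: "open U" and z: "\<And>y. y \<in> U \<Longrightarrow> f y = 0" and x: "x \<in> U"
  have z1: "\<And>y. y \<in> U \<Longrightarrow> Pcomp a1 a2 b j f y = 0" for j by (rule zero_open_Pcomp[OF U z])
  show ?thesis unfolding Hop_def using zero_open_Pcomp[OF U z1 x] z[OF x] by simp
qed

lemma cont_meas: "continuous_on UNIV f \<Longrightarrow> f \<in> borel_measurable lborel"
  by (simp add: borel_measurable_continuous_onI)

lemma nn_finite:
  fixes u :: "real \<times> real \<Rightarrow> complex"
  assumes "continuous_on UNIV u" "\<And>y. norm y > R \<Longrightarrow> u y = 0"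
  shows "(\<integral>\<^sup>+x. ennreal ((cmod (u x))\<^sup>2) \<partial>lborel) < \<infinity>"
proof -
  have "integrable lborel (\<lambda>x. (cmod (u x))\<^sup>2)"
    by (rule cont_supp_integrable[where R = R]) (use assms in \<open>auto intro!: continuous_intros\<close>)
  then show ?thesis by (simp add: integrable_iff_bounded)
qed

lemma sq_tri: "(cmod (a - b))\<^sup>2 \<le> 2 * (cmod (a - g))\<^sup>2 + 2 * (cmod (b - g))\<^sup>2"
proof -
  have "cmod (a - b) \<le> cmod (a - g) + cmod (b - g)"
    using norm_triangle_ineq4[of "a - g" "b - g"] by simp
  then have "(cmod (a - b))\<^sup>2 \<le> (cmod (a - g) + cmod (b - g))\<^sup>2"
    by (intro power_mono) auto
  also have "\<dots> \<le> 2 * (cmod (a - g))\<^sup>2 + 2 * (cmod (b - g))\<^sup>2"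
    using sum_squares_bound[of "cmod (a - g)" "cmod (b - g)"] by (simp add: power2_eq_square algebra_simps)
  finally show ?thesis .
qed

lemma nn_tri:
  fixes a b g :: "real \<times> real \<Rightarrow> complex"
  assumes [measurable]: "a \<in> borel_measurable lborel" "b \<in> borel_measurable lborel" "g \<in> borel_measurable lborel"
  shows "(\<integral>\<^sup>+x. ennreal ((cmod (a x - b x))\<^sup>2) \<partial>lborel) \<le>
     2 * (\<integral>\<^sup>+x. ennreal ((cmod (a x - g x))\<^sup>2) \<partial>lborel) + 2 * (\<integral>\<^sup>+x. ennreal ((cmod (b x - g x))\<^sup>2) \<partial>lborel)"
proof -
  have "(\<integral>\<^sup>+x. ennreal ((cmod (a x - b x))\<^sup>2) \<partial>lborel) \<le>
      (\<integral>\<^sup>+x. 2 * ennreal ((cmod (a x - g x))\<^sup>2) + 2 * ennreal ((cmod (b x - g x))\<^sup>2) \<partial>lborel)"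
  proof (rule nn_integral_mono)
    fix x
    have "ennreal ((cmod (a x - b x))\<^sup>2) \<le> ennreal (2 * (cmod (a x - g x))\<^sup>2 + 2 * (cmod (b x - g x))\<^sup>2)"
      by (rule ennreal_leI) (rule sq_tri)
    also have "\<dots> = 2 * ennreal ((cmod (a x - g x))\<^sup>2) + 2 * ennreal ((cmod (b x - g x))\<^sup>2)"
      by (simp add: ennreal_plus ennreal_mult)
    finally show "ennreal ((cmod (a x - b x))\<^sup>2) \<le> 2 * ennreal ((cmod (a x - g x))\<^sup>2) + 2 * ennreal ((cmod (b x - g x))\<^sup>2)" .
  qed
  also have "\<dots> = 2 * (\<integral>\<^sup>+x. ennreal ((cmod (a x - g x))\<^sup>2) \<partial>lborel) + 2 * (\<integral>\<^sup>+x. ennreal ((cmod (b x - g x))\<^sup>2) \<partial>lborel)"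
    by (simp add: nn_integral_add nn_integral_cmult)
  finally show ?thesis .
qed

lemma sq3: "((x::real) + y + z)\<^sup>2 \<le> 3 * (x\<^sup>2 + y\<^sup>2 + z\<^sup>2)"
proof -
  have "0 \<le> (x - y)\<^sup>2 + (y - z)\<^sup>2 + (x - z)\<^sup>2" by simp
  then show ?thesis by (simp add: power2_eq_square algebra_simps)
qed

lemma main_est:
  assumes a: "SM a1" "SM a2" and V: "SM V" and M: "\<And>x. \<bar>V x\<bar> \<le> M"
    and e: "SM (e :: real \<times> real \<Rightarrow> real)" and e0: "partial 0 e = (\<lambda>_. 0)"
    and e1: "\<And>x. \<bar>e x\<bar> \<le> 1" and B1: "\<And>x. \<bar>partial 1 e x\<bar> \<le> B1"
    and B2: "\<And>x. \<bar>partial 1 (partial 1 e) x\<bar> \<le> B2"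
    and f: "SM f" and z: "\<And>y. norm y > R \<Longrightarrow> f y = 0"
  shows "(\<integral>\<^sup>+x. ennreal ((cmod (Hop V a1 a2 b (\<lambda>x. of_real (e x) * f x) x))\<^sup>2) \<partial>lborel)
     \<le> ennreal ((3 + 12 * B1\<^sup>2 + 3 * B2\<^sup>2) * (2 + M)) *
       ((\<integral>\<^sup>+x. ennreal ((cmod (Hop V a1 a2 b f x))\<^sup>2) \<partial>lborel) + (\<integral>\<^sup>+x. ennreal ((cmod (f x))\<^sup>2) \<partial>lborel))"
proof -
  let ?H = "Hop V a1 a2 b f"
  let ?P = "Pcomp a1 a2 b 1 f"
  define A where "A = 3 + 12 * B1\<^sup>2 + 3 * B2\<^sup>2"
  have A0: "A \<ge> 0" unfolding A_def by simp
  have M0: "M \<ge> 0" using M[of 0] by simp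
  have B10: "B1 \<ge> 0" using B1[of 0] by simp
  have B20: "B2 \<ge> 0" using B2[of 0] by simp
  have [measurable]: "?H \<in> borel_measurable lborel"
    by (rule cont_meas[OF SM_cont[OF SM_Hop[OF V a f]]])
  have [measurable]: "?P \<in> borel_measurable lborel"
    by (rule cont_meas[OF SM_cont[OF SM_Pcomp[OF a f]]])
  have [measurable]: "Pcomp a1 a2 b (Suc 0) f \<in> borel_measurable lborel"
    by (rule cont_meas[OF SM_cont[OF SM_Pcomp[OF a f]]])
  have [measurable]: "f \<in> borel_measurable lborel"
    by (rule cont_meas[OF SM_cont[OF f]])
  define IH where "IH = (\<integral>\<^sup>+x. ennreal ((cmod (?H x))\<^sup>2) \<partial>lborel)"
  define IP where "IP = (\<integral>\<^sup>+x. ennreal ((cmod (?P x))\<^sup>2) \<partial>lborel)"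
  define IF where "IF = (\<integral>\<^sup>+x. ennreal ((cmod (f x))\<^sup>2) \<partial>lborel)"
  have pt: "(cmod (Hop V a1 a2 b (\<lambda>x. of_real (e x) * f x) x))\<^sup>2
      \<le> A * ((cmod (?H x))\<^sup>2 + (cmod (?P x))\<^sup>2 + (cmod (f x))\<^sup>2)" for x
  proof -
    have eq: "Hop V a1 a2 b (\<lambda>x. of_real (e x) * f x) x = of_real (e x) * ?H x
        - 2 * \<i> * of_real (partial 1 e x) * ?P x - of_real (partial 1 (partial 1 e) x) * f x"
      using Hop_eta[OF a e f e0] by simp
    have "cmod (Hop V a1 a2 b (\<lambda>x. of_real (e x) * f x) x) \<le>
        cmod (of_real (e x) * ?H x) + cmod (2 * \<i> * of_real (partial 1 e x) * ?P x)
        + cmod (of_real (partial 1 (partial 1 e) x) * f x)"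
    proof -
      have t1: "cmod (X - Y - Z) \<le> cmod (X - Y) + cmod Z" for X Y Z :: complex by (rule norm_triangle_ineq4)
      have t2: "cmod (X - Y) \<le> cmod X + cmod Y" for X Y :: complex by (rule norm_triangle_ineq4)
      show ?thesis unfolding eq using t1 t2 by (meson add_mono order_refl order_trans)
    qed
    also have "\<dots> \<le> cmod (?H x) + 2 * B1 * cmod (?P x) + B2 * cmod (f x)"
    proof (intro add_mono)
      show "cmod (of_real (e x) * ?H x) \<le> cmod (?H x)"
        using e1[of x] by (simp add: norm_mult mult_left_le_one_le)
      show "cmod (2 * \<i> * of_real (partial 1 e x) * ?P x) \<le> 2 * B1 * cmod (?P x)"
        using B1[of x] by (simp add: norm_mult mult_right_mono)
      show "cmod (of_real (partial 1 (partial 1 e) x) * f x) \<le> B2 * cmod (f x)"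
        using B2[of x] by (simp add: norm_mult mult_right_mono)
    qed
    finally have n: "cmod (Hop V a1 a2 b (\<lambda>x. of_real (e x) * f x) x) \<le>
        cmod (?H x) + 2 * B1 * cmod (?P x) + B2 * cmod (f x)" .
    have "(cmod (Hop V a1 a2 b (\<lambda>x. of_real (e x) * f x) x))\<^sup>2 \<le>
        (cmod (?H x) + 2 * B1 * cmod (?P x) + B2 * cmod (f x))\<^sup>2"
      by (rule power_mono[OF n]) simp
    also have "\<dots> \<le> 3 * ((cmod (?H x))\<^sup>2 + (2 * B1 * cmod (?P x))\<^sup>2 + (B2 * cmod (f x))\<^sup>2)"
      by (rule sq3)
    also have "\<dots> = 3 * (cmod (?H x))\<^sup>2 + 12 * B1\<^sup>2 * (cmod (?P x))\<^sup>2 + 3 * B2\<^sup>2 * (cmod (f x))\<^sup>2"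
      by (simp add: power_mult_distrib algebra_simps)
    also have "\<dots> \<le> A * ((cmod (?H x))\<^sup>2 + (cmod (?P x))\<^sup>2 + (cmod (f x))\<^sup>2)"
    proof -
      define h where "h = (cmod (?H x))\<^sup>2"
      define p where "p = (cmod (?P x))\<^sup>2"
      define q where "q = (cmod (f x))\<^sup>2"
      have nn: "h \<ge> 0" "p \<ge> 0" "q \<ge> 0" unfolding h_def p_def q_def by simp_all
      have "A * (h + p + q) = (3 * h + 12 * B1\<^sup>2 * p + 3 * B2\<^sup>2 * q)
          + ((12 * B1\<^sup>2 + 3 * B2\<^sup>2) * h + (3 + 3 * B2\<^sup>2) * p + (3 + 12 * B1\<^sup>2) * q)"
        unfolding A_def by (simp add: algebra_simps)
      moreover have "0 \<le> (12 * B1\<^sup>2 + 3 * B2\<^sup>2) * h + (3 + 3 * B2\<^sup>2) * p + (3 + 12 * B1\<^sup>2) * q"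
        using nn by (intro add_nonneg_nonneg mult_nonneg_nonneg) auto
      ultimately show ?thesis unfolding h_def p_def q_def by linarith
    qed
    finally show ?thesis .
  qed
  have "(\<integral>\<^sup>+x. ennreal ((cmod (Hop V a1 a2 b (\<lambda>x. of_real (e x) * f x) x))\<^sup>2) \<partial>lborel)
      \<le> (\<integral>\<^sup>+x. ennreal A * (ennreal ((cmod (?H x))\<^sup>2) + ennreal ((cmod (?P x))\<^sup>2) + ennreal ((cmod (f x))\<^sup>2)) \<partial>lborel)"
  proof (rule nn_integral_mono)
    fix x
    show "ennreal ((cmod (Hop V a1 a2 b (\<lambda>x. of_real (e x) * f x) x))\<^sup>2) \<le>
        ennreal A * (ennreal ((cmod (?H x))\<^sup>2) + ennreal ((cmod (?P x))\<^sup>2) + ennreal ((cmod (f x))\<^sup>2))"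
      using ennreal_leI[OF pt[of x]] A0 by (simp add: ennreal_plus ennreal_mult)
  qed
  also have "\<dots> = ennreal A * (IH + IP + IF)"
    unfolding IH_def IP_def IF_def by (simp add: nn_integral_add nn_integral_cmult)
  also have "\<dots> \<le> ennreal A * (IH + ennreal (1 + M) * (IH + IF) + IF)"
  proof -
    have "IP \<le> (\<integral>\<^sup>+x. ennreal ((cmod (?H x))\<^sup>2 / 2 + (1/2 + M) * (cmod (f x))\<^sup>2) \<partial>lborel)"
      unfolding IP_def by (rule energy_bound[OF a V f z M])
    also have "\<dots> \<le> (\<integral>\<^sup>+x. ennreal (1 + M) * (ennreal ((cmod (?H x))\<^sup>2) + ennreal ((cmod (f x))\<^sup>2)) \<partial>lborel)"
    proof (rule nn_integral_mono)
      fix x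
      have "(cmod (?H x))\<^sup>2 / 2 + (1/2 + M) * (cmod (f x))\<^sup>2 \<le> (1 + M) * ((cmod (?H x))\<^sup>2 + (cmod (f x))\<^sup>2)"
        using M0 by (simp add: algebra_simps) (simp add: add_mono mult_left_mono)
      from ennreal_leI[OF this] show "ennreal ((cmod (?H x))\<^sup>2 / 2 + (1/2 + M) * (cmod (f x))\<^sup>2)
          \<le> ennreal (1 + M) * (ennreal ((cmod (?H x))\<^sup>2) + ennreal ((cmod (f x))\<^sup>2))"
        using M0 by (simp add: ennreal_plus ennreal_mult)
    qed
    also have "\<dots> = ennreal (1 + M) * (IH + IF)"
      unfolding IH_def IF_def by (simp add: nn_integral_add nn_integral_cmult)
    finally have "IP \<le> ennreal (1 + M) * (IH + IF)" .
    then show ?thesis by (intro mult_left_mono add_mono) auto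
  qed
  also have "\<dots> = ennreal (A * (2 + M)) * (IH + IF)"
  proof -
    have e2: "ennreal (2 + M) = 1 + ennreal (1 + M)"
      using ennreal_plus[of 1 "1 + M"] M0 by simp
    have "ennreal (A * (2 + M)) = ennreal A * ennreal (2 + M)"
      using A0 M0 by (intro ennreal_mult) auto
    then have "ennreal (A * (2 + M)) = ennreal A * (1 + ennreal (1 + M))" unfolding e2 .
    then show ?thesis by (simp add: algebra_simps)
  qed
  finally show ?thesis unfolding A_def IH_def IF_def .
qed

lemma line_diff_zero:
  fixes h :: "real \<times> real \<Rightarrow> 'a::real_normed_vector"
  assumes U: "open U" "x \<in> U" and z: "\<And>y. y \<in> U \<Longrightarrow> h y = 0"
  shows "(\<lambda>t. h (x + t *\<^sub>R v)) differentiable (at 0)"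
proof -
  let ?S = "(\<lambda>t::real. x + t *\<^sub>R v) -` U"
  have oS: "open ?S" by (rule open_vimage[OF U(1)]) (auto intro!: continuous_intros)
  have "((\<lambda>t. h (x + t *\<^sub>R v)) has_vector_derivative 0) (at 0)"
    by (rule has_vector_derivative_transform_within_open[OF has_vector_derivative_const oS])
       (use U z in auto)
  then show ?thesis by (rule differentiableI_vector)
qed

lemma open_E: "open E_half"
  unfolding E_half_def by (rule open_Collect_less) (auto intro: continuous_intros)

lemma open_below: "open {x::real\<times>real. snd x < c}"
  by (rule open_Collect_less) (auto intro: continuous_intros)

lemma smooth_extend:
  fixes e :: "real \<times> real \<Rightarrow> real"
  assumes sm: "smooth_on E_half e" and c: "0 < c" and z: "\<And>x. snd x \<le> c \<Longrightarrow> e x = 0"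
  shows "SM e"
  unfolding smooth_iff
proof
  fix ds
  let ?U = "{x::real\<times>real. snd x < c}"
  have zU: "dpar ds e y = 0" if "y \<in> ?U" for y
    by (rule dpar_zero_open[OF open_below]) (use z that in auto)
  have UN: "E_half \<union> ?U = UNIV" using c unfolding E_half_def by auto
  have cE: "continuous_on E_half (dpar ds e)" using sm unfolding smooth_on_def by blast
  have cU: "continuous_on ?U (dpar ds e)"
    by (rule continuous_on_eq[OF continuous_on_const]) (use zU in auto)
  have cont: "continuous_on UNIV (dpar ds e)"
    using continuous_on_open_Un[OF open_E open_below cE cU] UN by simp
  have "LD (dpar ds e)" unfolding LD_def
  proof (intro allI)
    fix i x
    show "(\<lambda>t. dpar ds e (x + t *\<^sub>R coord_dir i)) differentiable at 0"
    proof (cases "x \<in> E_half")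
      case True
      have "\<forall>i\<in>{0,1}. (\<lambda>t. dpar ds e (x + t *\<^sub>R coord_dir i)) differentiable (at 0)"
        using sm True unfolding smooth_on_def by blast
      then show ?thesis using coord_dir_cases[of i] by auto
    next
      case False
      then have "x \<in> ?U" using c unfolding E_half_def by auto
      then show ?thesis by (rule line_diff_zero[OF open_below _ zU])
    qed
  qed
  then show "D0 (dpar ds e)" using cont unfolding D0_def by blast
qed

lemma eta_partial0:
  fixes e :: "real \<times> real \<Rightarrow> real"
  assumes z: "\<And>x. x \<notin> E_half \<Longrightarrow> e x = 0" and h: "\<forall>x\<in>E_half. e x = h (snd x)"
  shows "partial 0 e = (\<lambda>_. 0)"
proof
  fix x :: "real \<times> real"
  have "(\<lambda>t. e (x + t *\<^sub>R coord_dir 0)) = (\<lambda>t. e x)"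
  proof
    fix t
    have s: "snd (x + t *\<^sub>R coord_dir 0) = snd x" by (simp add: coord_dir_def)
    show "e (x + t *\<^sub>R coord_dir 0) = e x"
    proof (cases "x \<in> E_half")
      case True
      then have "x + t *\<^sub>R coord_dir 0 \<in> E_half" unfolding E_half_def by (simp only: mem_Collect_eq s)
      then show ?thesis using h True s by metis
    next
      case False
      then have "x + t *\<^sub>R coord_dir 0 \<notin> E_half" unfolding E_half_def by (simp only: mem_Collect_eq s simp_thms)
      then show ?thesis using z False by metis
    qed
  qed
  then show "partial 0 e x = 0" unfolding partial_def by simp
qed

theorem proposition4p2:
  fixes V a1 a2 :: "real \<times> real \<Rightarrow> real"
    and b :: real
    and \<eta> :: "real \<Rightarrow> real \<times> real \<Rightarrow> real"
  assumes V: "BC_inf V"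
    and A1: "BC_inf a1" and A2: "BC_inf a2"
    and eta_zero: "\<And>l x. l > 2 \<Longrightarrow> x \<notin> E_half \<Longrightarrow> \<eta> l x = 0"
    and eta_x2: "\<And>l. l > 2 \<Longrightarrow> \<exists>h. \<forall>x\<in>E_half. \<eta> l x = h (snd x)"
    and eta_smooth: "\<And>l. l > 2 \<Longrightarrow> smooth_on E_half (\<eta> l)"
    and eta_range: "\<And>l x. l > 2 \<Longrightarrow> x \<in> E_half \<Longrightarrow> \<eta> l x \<in> {0..1}"
    and eta_supp: "\<And>l. l > 2 \<Longrightarrow>
        closure {x \<in> E_half. \<eta> l x \<noteq> 0} \<inter> E_half \<subseteq> {x. snd x > sqrt l / 4}"
    and eta_deriv: "\<And>n. n \<ge> 1 \<Longrightarrow> \<exists>C. \<forall>l > 2. \<forall>x\<in>E_half.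
        \<bar>dpar (replicate n 1) (\<eta> l) x\<bar> \<le> C * l powr (- real n / 2)"
  shows "\<forall>l > 2. \<forall>\<psi>. (\<exists>g. Hb_graph V a1 a2 b \<psi> g) \<longrightarrow>
           (\<exists>f. HbE_graph V a1 a2 b (\<lambda>x. complex_of_real (\<eta> l x) * \<psi> x) f
              \<and> Hb_graph V a1 a2 b (\<lambda>x. complex_of_real (\<eta> l x) * \<psi> x) f)"
proof (intro allI impI)
  fix l :: real and \<psi> :: "real \<times> real \<Rightarrow> complex"
  assume l: "l > 2" and "\<exists>g. Hb_graph V a1 a2 b \<psi> g"
  then obtain g where "Hb_graph V a1 a2 b \<psi> g" by blast
  then obtain \<phi> where L2psi: "L2 \<psi>" and L2g: "L2 g" and Cc: "\<And>n. Cc_plane (\<phi> n)"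
    and cPc: "L2_conv \<phi> \<psi>" and cHc: "L2_conv (\<lambda>n. Hop V a1 a2 b (\<phi> n)) g"
    unfolding Hb_graph_def closure_graph_def by blast
  have SV: "SM V" using V unfolding BC_inf_def by (rule conjunct1)
  have Sa1: "SM a1" using A1 unfolding BC_inf_def by (rule conjunct1)
  have Sa2: "SM a2" using A2 unfolding BC_inf_def by (rule conjunct1)
  note Sa = Sa1 Sa2
  obtain M where M: "\<And>x. \<bar>V x\<bar> \<le> M"
  proof -
    have "bounded (range (dpar [] V))" using V unfolding BC_inf_def by blast
    then obtain M where "\<forall>y\<in>range V. norm y \<le> M" unfolding bounded_iff by auto
    then have "norm (V x) \<le> M" for x by blast
    then have "\<bar>V x\<bar> \<le> M" for x by (simp only: real_norm_def)
    then show ?thesis by (rule that)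
  qed
  define e where "e = \<eta> l"
  define c where "c = sqrt l / 4"
  have c0: "c > 0" unfolding c_def using l by simp
  have ez: "e x = 0" if "snd x \<le> c" for x
  proof (rule ccontr)
    assume ne: "e x \<noteq> 0"
    then have xE: "x \<in> E_half" using eta_zero[OF l] unfolding e_def by blast
    have "x \<in> {x \<in> E_half. \<eta> l x \<noteq> 0}" using xE ne unfolding e_def by simp
    then have "x \<in> closure {x \<in> E_half. \<eta> l x \<noteq> 0}" using closure_subset by (rule subsetD[rotated])
    then have "x \<in> closure {x \<in> E_half. \<eta> l x \<noteq> 0} \<inter> E_half" using xE by (rule IntI)
    then have "x \<in> {x. snd x > sqrt l / 4}" using eta_supp[OF l] by (rule subsetD[rotated])
    then have "snd x > c" unfolding c_def by simp
    then show False using that by simp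
  qed
  have eS: "SM e" unfolding e_def
    by (rule smooth_extend[OF eta_smooth[OF l] c0]) (rule ez[unfolded e_def])
  have e0: "partial 0 e = (\<lambda>_. 0)"
  proof -
    obtain h where "\<forall>x\<in>E_half. \<eta> l x = h (snd x)" using eta_x2[OF l] by blast
    then show ?thesis unfolding e_def by (rule eta_partial0[where h = h, rotated]) (rule eta_zero[OF l])
  qed
  have e1: "\<bar>e x\<bar> \<le> 1" for x
    using eta_range[OF l, of x] eta_zero[OF l, of x] unfolding e_def by (cases "x \<in> E_half") auto
  let ?U = "{x::real\<times>real. snd x < c}"
  have eU: "y \<in> ?U \<Longrightarrow> e y = 0" for y using ez by simp
  have notE_U: "x \<notin> E_half \<Longrightarrow> x \<in> ?U" for x using c0 unfolding E_half_def by auto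
  obtain B1 where B1: "\<And>x. \<bar>partial 1 e x\<bar> \<le> B1"
  proof -
    obtain C where C: "\<forall>l > 2. \<forall>x\<in>E_half. \<bar>dpar (replicate 1 1) (\<eta> l) x\<bar> \<le> C * l powr (- real 1 / 2)"
      using eta_deriv[of 1] by auto
    have "\<bar>partial 1 e x\<bar> \<le> \<bar>C * l powr (- real 1 / 2)\<bar>" for x
    proof (cases "x \<in> E_half")
      case True
      then have "\<bar>dpar (replicate 1 1) (\<eta> l) x\<bar> \<le> C * l powr (- real 1 / 2)" using C l by blast
      then show ?thesis unfolding e_def by simp
    next
      case False
      have "dpar [1] e x = 0" by (rule dpar_zero_open[OF open_below eU notE_U[OF False]])
      then show ?thesis by simp
    qed
    then show ?thesis using that by blast
  qed
  obtain B2 where B2: "\<And>x. \<bar>partial 1 (partial 1 e) x\<bar> \<le> B2"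
  proof -
    obtain C where C: "\<forall>l > 2. \<forall>x\<in>E_half. \<bar>dpar (replicate 2 1) (\<eta> l) x\<bar> \<le> C * l powr (- real 2 / 2)"
      using eta_deriv[of 2] by auto
    have "\<bar>partial 1 (partial 1 e) x\<bar> \<le> \<bar>C * l powr (- real 2 / 2)\<bar>" for x
    proof (cases "x \<in> E_half")
      case True
      have r: "replicate 2 (1::nat) = [1, 1]" by (simp add: numeral_2_eq_2)
      have "\<bar>dpar (replicate 2 1) (\<eta> l) x\<bar> \<le> C * l powr (- real 2 / 2)" using C l True by blast
      then have "\<bar>partial 1 (partial 1 e) x\<bar> \<le> C * l powr (- real 2 / 2)" unfolding e_def r by simp
      then show ?thesis by (rule order_trans) (rule abs_ge_self)
    next
      case False
      have "dpar [1, 1] e x = 0" by (rule dpar_zero_open[OF open_below eU notE_U[OF False]])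
      then show ?thesis by simp
    qed
    then show ?thesis using that by blast
  qed
  have Sphi: "SM (\<phi> n)" for n using Cc unfolding Cc_plane_def by blast
  have "\<forall>n. \<exists>R. \<forall>x. norm x > R \<longrightarrow> \<phi> n x = 0" using Cc unfolding Cc_plane_def by blast
  from choice[OF this] obtain R where R: "\<And>n x. norm x > R n \<Longrightarrow> \<phi> n x = 0" by blast
  define ch where "ch n x = complex_of_real (e x) * \<phi> n x" for n x
  have Schi: "SM (ch n)" for n unfolding ch_def[abs_def] by (intro SM_mult SM_of_real eS Sphi)
  have Rchi: "norm x > R n \<Longrightarrow> ch n x = 0" for n x unfolding ch_def using R by simp
  have mHchi[measurable]: "Hop V a1 a2 b (ch n) \<in> borel_measurable lborel" for n
    by (rule cont_meas[OF SM_cont[OF SM_Hop[OF SV Sa Schi]]])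
  have mHphi[measurable]: "Hop V a1 a2 b (\<phi> n) \<in> borel_measurable lborel" for n
    by (rule cont_meas[OF SM_cont[OF SM_Hop[OF SV Sa Sphi]]])
  have mphi[measurable]: "\<phi> n \<in> borel_measurable lborel" for n
    by (rule cont_meas[OF SM_cont[OF Sphi]])
  have mpsi[measurable]: "\<psi> \<in> borel_measurable lborel" using L2psi unfolding L2_def by blast
  have mg[measurable]: "g \<in> borel_measurable lborel" using L2g unfolding L2_def by blast
  have me[measurable]: "(\<lambda>x. complex_of_real (e x)) \<in> borel_measurable lborel"
    by (rule cont_meas[OF SM_cont[OF SM_of_real[OF eS]]])
  define cH where "cH = (\<lambda>n. \<integral>\<^sup>+x. ennreal ((cmod (Hop V a1 a2 b (\<phi> n) x - g x))\<^sup>2) \<partial>lborel)"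
  define cP where "cP = (\<lambda>n. \<integral>\<^sup>+x. ennreal ((cmod (\<phi> n x - \<psi> x))\<^sup>2) \<partial>lborel)"
  have cH0: "cH \<longlonglongrightarrow> 0" using cHc unfolding L2_conv_def cH_def .
  have cP0: "cP \<longlonglongrightarrow> 0" using cPc unfolding L2_conv_def cP_def .
  define K where "K = ennreal ((3 + 12 * B1\<^sup>2 + 3 * B2\<^sup>2) * (2 + M))"
  define cc where "cc = (\<lambda>n. (2 * K) * (cH n + cP n))"
  have cc0: "cc \<longlonglongrightarrow> 0"
  proof -
    have "2 * K < top" unfolding K_def by (simp add: ennreal_mult_less_top)
    from ennreal_tendsto_cmult[OF this tendsto_add[OF cH0 cP0]] show ?thesis unfolding cc_def by simp
  qed
  have cauchy: "(\<integral>\<^sup>+x. ennreal ((cmod (Hop V a1 a2 b (ch n) x - Hop V a1 a2 b (ch m) x))\<^sup>2) \<partial>lborel)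
      \<le> cc n + cc m" for m n
  proof -
    define dd where "dd = (\<lambda>x. \<phi> n x - \<phi> m x)"
    have Sd: "SM dd" unfolding dd_def by (intro SM_diff Sphi)
    have Rd: "dd y = 0" if "norm y > max (R n) (R m)" for y
      unfolding dd_def using R[of n y] R[of m y] that by simp
    have md[measurable]: "dd \<in> borel_measurable lborel" unfolding dd_def by measurable
    have eq1: "(\<lambda>x. Hop V a1 a2 b (ch n) x - Hop V a1 a2 b (ch m) x) = Hop V a1 a2 b (\<lambda>x. of_real (e x) * dd x)"
    proof -
      have "(\<lambda>x. ch n x - ch m x) = (\<lambda>x. of_real (e x) * dd x)"
        unfolding ch_def dd_def by (simp add: algebra_simps)
      then show ?thesis using Hop_diff[OF Sa Schi Schi, of V b n m] by simp
    qed
    have eq2: "Hop V a1 a2 b dd = (\<lambda>x. Hop V a1 a2 b (\<phi> n) x - Hop V a1 a2 b (\<phi> m) x)"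
      unfolding dd_def by (rule Hop_diff[OF Sa Sphi Sphi])
    have "(\<integral>\<^sup>+x. ennreal ((cmod (Hop V a1 a2 b (ch n) x - Hop V a1 a2 b (ch m) x))\<^sup>2) \<partial>lborel)
        = (\<integral>\<^sup>+x. ennreal ((cmod (Hop V a1 a2 b (\<lambda>x. of_real (e x) * dd x) x))\<^sup>2) \<partial>lborel)"
      by (simp add: eq1[symmetric])
    also have "\<dots> \<le> K * ((\<integral>\<^sup>+x. ennreal ((cmod (Hop V a1 a2 b dd x))\<^sup>2) \<partial>lborel)
        + (\<integral>\<^sup>+x. ennreal ((cmod (dd x))\<^sup>2) \<partial>lborel))"
      unfolding K_def using main_est[OF Sa SV M eS e0 e1 B1 B2 Sd, where R = "max (R n) (R m)"] Rd by blast
    also have "\<dots> \<le> K * ((2 * cH n + 2 * cH m) + (2 * cP n + 2 * cP m))"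
    proof (intro mult_left_mono add_mono)
      show "(\<integral>\<^sup>+x. ennreal ((cmod (Hop V a1 a2 b dd x))\<^sup>2) \<partial>lborel) \<le> 2 * cH n + 2 * cH m"
        unfolding eq2 cH_def by (rule nn_tri) measurable
      show "(\<integral>\<^sup>+x. ennreal ((cmod (dd x))\<^sup>2) \<partial>lborel) \<le> 2 * cP n + 2 * cP m"
        unfolding dd_def cP_def by (rule nn_tri) measurable
    qed simp
    also have "\<dots> = cc n + cc m" unfolding cc_def by (simp add: algebra_simps)
    finally show ?thesis .
  qed
  obtain r F where r: "strict_mono r" and mF[measurable]: "F \<in> borel_measurable lborel"
    and conv: "(\<lambda>k. \<integral>\<^sup>+x. ennreal ((cmod (Hop V a1 a2 b (ch (r k)) x - F x))\<^sup>2) \<partial>lborel) \<longlonglongrightarrow> 0"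
    using L2_complete[where u = "\<lambda>n. Hop V a1 a2 b (ch n)" and M = lborel and c = cc, OF mHchi cc0 cauchy]
    by blast
  define Pz where "Pz = (\<lambda>x. complex_of_real (e x) * \<psi> x)"
  have L2Psi: "L2 Pz"
    unfolding L2_def
  proof
    show "Pz \<in> borel_measurable lborel" unfolding Pz_def by measurable
    have "integrable lborel (\<lambda>x. (cmod (\<psi> x))\<^sup>2)" using L2psi unfolding L2_def by blast
    then show "integrable lborel (\<lambda>x. (cmod (Pz x))\<^sup>2)"
    proof (rule Bochner_Integration.integrable_bound)
      show "(\<lambda>x. (cmod (Pz x))\<^sup>2) \<in> borel_measurable lborel" unfolding Pz_def by measurable
      show "AE x in lborel. norm ((cmod (Pz x))\<^sup>2) \<le> norm ((cmod (\<psi> x))\<^sup>2)"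
      proof (rule AE_I2)
        fix x
        have "cmod (Pz x) \<le> cmod (\<psi> x)"
          unfolding Pz_def using e1[of x] by (simp add: norm_mult mult_left_le_one_le)
        then show "norm ((cmod (Pz x))\<^sup>2) \<le> norm ((cmod (\<psi> x))\<^sup>2)"
          by (simp add: power_mono)
      qed
    qed
  qed
  have L2F: "L2 F"
    unfolding L2_def
  proof
    show "F \<in> borel_measurable lborel" by (rule mF)
    obtain k where k: "(\<integral>\<^sup>+x. ennreal ((cmod (Hop V a1 a2 b (ch (r k)) x - F x))\<^sup>2) \<partial>lborel) < 1"
      using order_tendstoD(2)[OF conv, of 1] by (auto simp: eventually_sequentially)
    let ?u = "Hop V a1 a2 b (ch (r k))"
    have fin: "(\<integral>\<^sup>+x. ennreal ((cmod (?u x))\<^sup>2) \<partial>lborel) < \<infinity>"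
      by (rule nn_finite[where R = "R (r k)"]) (use SM_cont[OF SM_Hop[OF SV Sa Schi]] supp_Hop[OF Rchi] in auto)
    have "(\<integral>\<^sup>+x. ennreal ((cmod (F x - 0))\<^sup>2) \<partial>lborel) \<le>
        2 * (\<integral>\<^sup>+x. ennreal ((cmod (F x - ?u x))\<^sup>2) \<partial>lborel) + 2 * (\<integral>\<^sup>+x. ennreal ((cmod (0 - ?u x))\<^sup>2) \<partial>lborel)"
      by (rule nn_tri[where a = F and b = "\<lambda>_. 0" and g = ?u]) measurable
    also have "\<dots> < \<infinity>"
    proof -
      have "(\<integral>\<^sup>+x. ennreal ((cmod (F x - ?u x))\<^sup>2) \<partial>lborel) < 1"
        using k by (simp add: norm_minus_commute)
      then have "(\<integral>\<^sup>+x. ennreal ((cmod (F x - ?u x))\<^sup>2) \<partial>lborel) < \<infinity>"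
        by (rule less_trans) simp
      moreover have "(\<integral>\<^sup>+x. ennreal ((cmod (0 - ?u x))\<^sup>2) \<partial>lborel) < \<infinity>"
        using fin by simp
      ultimately show ?thesis by (simp add: ennreal_mult_less_top)
    qed
    finally have "(\<integral>\<^sup>+x. ennreal ((cmod (F x))\<^sup>2) \<partial>lborel) < \<infinity>" by simp
    then show "integrable lborel (\<lambda>x. (cmod (F x))\<^sup>2)"
      by (simp add: integrable_iff_bounded)
  qed
  have convP: "L2_conv (\<lambda>k. ch (r k)) Pz"
    unfolding L2_conv_def
  proof (rule tendsto_sandwich[of "\<lambda>_. 0" _ _ "\<lambda>k. cP (r k)"])
    show "(\<lambda>k. cP (r k)) \<longlonglongrightarrow> 0" using LIMSEQ_subseq_LIMSEQ[OF cP0 r] by (simp add: comp_def)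
    show "\<forall>\<^sub>F k in sequentially. (\<integral>\<^sup>+x. ennreal ((cmod (ch (r k) x - Pz x))\<^sup>2) \<partial>lborel) \<le> cP (r k)"
    proof (intro always_eventually allI)
      fix k
      show "(\<integral>\<^sup>+x. ennreal ((cmod (ch (r k) x - Pz x))\<^sup>2) \<partial>lborel) \<le> cP (r k)"
        unfolding cP_def
      proof (rule nn_integral_mono)
        fix x
        have "ch (r k) x - Pz x = complex_of_real (e x) * (\<phi> (r k) x - \<psi> x)"
          unfolding ch_def Pz_def by (simp add: algebra_simps)
        then have "cmod (ch (r k) x - Pz x) \<le> cmod (\<phi> (r k) x - \<psi> x)"
          using e1[of x] by (simp add: norm_mult mult_left_le_one_le)
        then show "ennreal ((cmod (ch (r k) x - Pz x))\<^sup>2) \<le> ennreal ((cmod (\<phi> (r k) x - \<psi> x))\<^sup>2)"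
          by (intro ennreal_leI power_mono) auto
      qed
    qed
  qed auto
  have Ccchi: "Cc_plane (ch n)" for n unfolding Cc_plane_def using Schi Rchi by blast
  have CcEchi: "Cc_Ebar (ch n)" for n
    unfolding Cc_Ebar_def
  proof (intro conjI allI impI)
    show "ch n x = 0" if "x \<notin> E_half" for x unfolding ch_def using eU[OF notE_U[OF that]] by simp
    show "smooth_on E_half (ch n)"
      using Schi[of n] unfolding smooth_on_def by (auto intro: continuous_on_subset)
    show "\<exists>g. continuous_on (closure E_half) g \<and> (\<forall>x\<in>E_half. g x = dpar ds (ch n) x)" for ds
      using SM_cont[OF SM_dpar[OF Schi[of n], of ds]] by (auto intro: continuous_on_subset)
    show "\<exists>a>0. \<forall>x. \<not> (- a < fst x \<and> fst x < a \<and> 0 < snd x \<and> snd x < a) \<longrightarrow> ch n x = 0"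
    proof (intro exI conjI allI impI)
      show "(0::real) < \<bar>R n\<bar> + 1" by simp
      fix x :: "real \<times> real"
      assume nb: "\<not> (- (\<bar>R n\<bar> + 1) < fst x \<and> fst x < \<bar>R n\<bar> + 1 \<and> 0 < snd x \<and> snd x < \<bar>R n\<bar> + 1)"
      show "ch n x = 0"
      proof (cases "0 < snd x")
        case False
        then show ?thesis unfolding ch_def using ez[of x] c0 by simp
      next
        case True
        then have "\<bar>fst x\<bar> \<ge> \<bar>R n\<bar> + 1 \<or> \<bar>snd x\<bar> \<ge> \<bar>R n\<bar> + 1" using nb by auto
        moreover have "\<bar>fst x\<bar> \<le> norm x" "\<bar>snd x\<bar> \<le> norm x"
          using norm_fst_le[of "fst x" "snd x"] norm_snd_le[of "snd x" "fst x"] by simp_all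
        ultimately have "norm x > R n" by linarith
        then show ?thesis by (rule Rchi)
      qed
    qed
  qed
  have HopE_eq: "HopE V a1 a2 b (ch n) = Hop V a1 a2 b (ch n)" for n
  proof
    fix x
    show "HopE V a1 a2 b (ch n) x = Hop V a1 a2 b (ch n) x"
    proof (cases "x \<in> E_half")
      case True then show ?thesis unfolding HopE_def by simp
    next
      case False
      have "Hop V a1 a2 b (ch n) x = 0"
        by (rule zero_open_Hop[OF open_below _ notE_U[OF False]]) (use eU in \<open>simp add: ch_def\<close>)
      then show ?thesis unfolding HopE_def using False by simp
    qed
  qed
  have convH: "L2_conv (\<lambda>k. Hop V a1 a2 b (ch (r k))) F" unfolding L2_conv_def by (rule conv)
  have "HbE_graph V a1 a2 b Pz F \<and> Hb_graph V a1 a2 b Pz F"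
    unfolding HbE_graph_def Hb_graph_def closure_graph_def
  proof (intro conjI)
    show "\<exists>\<phi>'. (\<forall>n. Cc_Ebar (\<phi>' n)) \<and> L2_conv \<phi>' Pz \<and> L2_conv (\<lambda>n. HopE V a1 a2 b (\<phi>' n)) F"
      using CcEchi convP convH HopE_eq by (intro exI[of _ "\<lambda>k. ch (r k)"]) simp
    show "\<exists>\<phi>'. (\<forall>n. Cc_plane (\<phi>' n)) \<and> L2_conv \<phi>' Pz \<and> L2_conv (\<lambda>n. Hop V a1 a2 b (\<phi>' n)) F"
      using Ccchi convP convH by (intro exI[of _ "\<lambda>k. ch (r k)"]) simp
  qed (use L2Psi L2F in auto)
  then show "\<exists>f. HbE_graph V a1 a2 b (\<lambda>x. complex_of_real (\<eta> l x) * \<psi> x) f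
              \<and> Hb_graph V a1 a2 b (\<lambda>x. complex_of_real (\<eta> l x) * \<psi> x) f"
    unfolding Pz_def e_def by blast
qed

end
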